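(* $Q^*(\mathcal{G})=\mathrm{Free}(N)$, where $N$ is the set of the following eleven graphs: $\overline{C_3}$, $\overline{C_5}$, $\overline{C_7}$, and $G_1,\dots,G_8$ defined as follows. $G_1$: the join of a path $P_4$ and an edge $K_2$ (every vertex of the $P_4$ adjacent to both vertices of the $K_2$). $G_2$: the join of a cycle $C_4$ and an edge $K_2$. $G_3$: the join of $2K_2$ and an edge $K_2$. $G_4$: a clique on vertices $a,b,c,d$ together with two non-adjacent vertices $e,f$, where $e$ is adjacent exactly to $b,c$ and $f$ is adjacent exactly to $a,d$. $G_{5+k}$ for $k\in\{0,1,2,3\}$: vertices $x,p_1,p_2,p_3,y,q_1,q_2,q_3$, where $\{x,p_1,p_2,p_3\}$ and $\{y,q_1,q_2,q_3\}$ are cliques, $x$ is adjacent to $q_1,q_2,q_3$, $y$ is adjacent to $p_1,p_2,p_3$, $x$ is not adjacent to $y$, and among pairs $p_iq_j$ exactly the pairs $p_iq_i$ with $i\le k$ are edges.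
   Context: All graphs are finite, simple and undirected; $\mathcal{G}$ denotes the class of all such graphs. $\overline{H}$ is the complement of $H$, $C_n$ the chordless cycle and $P_n$ the chordless path on $n$ vertices, $2K_2$ the disjoint union of two edges. For a set of graphs $M$, $\mathrm{Free}(M)$ is the class of graphs containing no induced subgraph isomorphic to a member of $M$. For a graph $G=(V,E)$, $Q(G)$ is the graph with vertex set $V\cup E$ in which $V$ is a clique, $E$ is a clique, and $v\in V$ is adjacent to $e\in E$ iff $v$ is an endpoint of $e$ in $G$; $Q^*(\mathcal{G})$ is the class of all graphs isomorphic to induced subgraphs of graphs $Q(G)$, $G\in\mathcal{G}$. *)

theory Defs
  imports Main
begin

type_synonym 'a graph = "'a set \<times> ('a \<Rightarrow> 'a \<Rightarrow> bool)"

definition verts :: "'a graph \<Rightarrow> 'a set" where "verts G = fst G"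
definition adj :: "'a graph \<Rightarrow> 'a \<Rightarrow> 'a \<Rightarrow> bool" where "adj G = snd G"

definition simple_graph :: "'a graph \<Rightarrow> bool" where
  "simple_graph G \<longleftrightarrow> finite (verts G)
     \<and> (\<forall>x y. adj G x y \<longrightarrow> x \<in> verts G \<and> y \<in> verts G)
     \<and> (\<forall>x y. adj G x y \<longrightarrow> adj G y x)
     \<and> (\<forall>x. \<not> adj G x x)"

definition induced_embeds :: "'b graph \<Rightarrow> 'a graph \<Rightarrow> bool" where
  "induced_embeds H G \<longleftrightarrow> (\<exists>f. inj_on f (verts H) \<and> f ` verts H \<subseteq> verts G
     \<and> (\<forall>x\<in>verts H. \<forall>y\<in>verts H. adj G (f x) (f y) \<longleftrightarrow> adj H x y))"

text \<open>Q(G): vertices of G (Inl) and edges of G as 2-sets (Inr); both cliques;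
  v adjacent to e iff v is an endpoint of e.\<close>
definition Qedges :: "'a graph \<Rightarrow> 'a set set" where
  "Qedges G = {{u, v} | u v. adj G u v}"

definition Qgraph :: "'a graph \<Rightarrow> ('a + 'a set) graph" where
  "Qgraph G = (Inl ` verts G \<union> Inr ` Qedges G,
     \<lambda>a b. a \<noteq> b \<and> a \<in> Inl ` verts G \<union> Inr ` Qedges G
           \<and> b \<in> Inl ` verts G \<union> Inr ` Qedges G
           \<and> (case (a, b) of
                (Inl _, Inl _) \<Rightarrow> True
              | (Inr _, Inr _) \<Rightarrow> True
              | (Inl v, Inr e) \<Rightarrow> v \<in> e
              | (Inr e, Inl v) \<Rightarrow> v \<in> e))"

text \<open>Membership in Q*(G): isomorphic to an induced subgraph of Q(G) for some finite
  simple graph G (taken w.l.o.g. with vertices in nat).\<close>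
definition in_Qstar :: "'a graph \<Rightarrow> bool" where
  "in_Qstar H \<longleftrightarrow> (\<exists>G :: nat graph. simple_graph G \<and> induced_embeds H (Qgraph G))"

definition Free :: "nat graph set \<Rightarrow> 'a graph \<Rightarrow> bool" where
  "Free M H \<longleftrightarrow> (\<forall>F\<in>M. \<not> induced_embeds F H)"

definition mk_graph :: "nat \<Rightarrow> (nat \<Rightarrow> nat \<Rightarrow> bool) \<Rightarrow> nat graph" where
  "mk_graph n P = ({0..<n}, \<lambda>x y. x < n \<and> y < n \<and> x \<noteq> y \<and> (P x y \<or> P y x))"

text \<open>Complement of the chordless cycle C_n (vertices 0..n-1 in cyclic order).\<close>
definition co_cycle :: "nat \<Rightarrow> nat graph" where
  "co_cycle n = mk_graph n (\<lambda>x y. y \<noteq> (x + 1) mod n \<and> x \<noteq> (y + 1) mod n)"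

text \<open>Join of a graph on {0..<n} (given by P) with an edge K2 on {n, n+1}.\<close>
definition join_K2 :: "nat \<Rightarrow> (nat \<Rightarrow> nat \<Rightarrow> bool) \<Rightarrow> nat graph" where
  "join_K2 n P = mk_graph (n + 2)
     (\<lambda>x y. (x < n \<and> y < n \<and> P x y) \<or> (x < n \<and> y \<ge> n) \<or> (x = n \<and> y = n + 1))"

definition G1 :: "nat graph" where "G1 = join_K2 4 (\<lambda>x y. y = x + 1)"
definition G2 :: "nat graph" where "G2 = join_K2 4 (\<lambda>x y. y = x + 1 \<or> (x = 0 \<and> y = 3))"
definition G3 :: "nat graph" where "G3 = join_K2 4 (\<lambda>x y. (x = 0 \<and> y = 1) \<or> (x = 2 \<and> y = 3))"

text \<open>a,b,c,d = 0,1,2,3; e = 4; f = 5.\<close>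
definition G4 :: "nat graph" where
  "G4 = mk_graph 6 (\<lambda>x y. (x < 4 \<and> y < 4) \<or> (x = 4 \<and> (y = 1 \<or> y = 2))
                         \<or> (x = 5 \<and> (y = 0 \<or> y = 3)))"

text \<open>G_{5+k}: x = 0, p_i = i, y = 4, q_i = i + 4.\<close>
definition G5k :: "nat \<Rightarrow> nat graph" where
  "G5k k = mk_graph 8 (\<lambda>x y. (x < 4 \<and> y < 4) \<or> (x \<ge> 4 \<and> y \<ge> 4)
      \<or> (x = 0 \<and> y \<ge> 5) \<or> (y = 4 \<and> 1 \<le> x \<and> x \<le> 3)
      \<or> (1 \<le> x \<and> x \<le> k \<and> y = x + 4))"

definition N_graphs :: "nat graph set" where
  "N_graphs = {co_cycle 3, co_cycle 5, co_cycle 7, G1, G2, G3, G4,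
               G5k 0, G5k 1, G5k 2, G5k 3}"

end

theory Submission
  imports Defs
begin


definition fe :: "'a graph \<Rightarrow> 'a \<Rightarrow> 'a \<Rightarrow> bool" where
  "fe H x y \<longleftrightarrow> x \<in> verts H \<and> y \<in> verts H \<and> x \<noteq> y \<and> \<not> adj H x y"

lemma embed_gen:
  assumes sg: "simple_graph H" and d: "distinct xs" and s: "set xs \<subseteq> verts H"
    and ln: "length xs = n" and vG: "verts G = {0..<n}"
    and symG: "\<And>i j. adj G i j \<Longrightarrow> adj G j i" and irrG: "\<And>i. \<not> adj G i i"
    and h0: "\<forall>j < n. \<forall>i < j. (adj H (xs!i) (xs!j) \<longleftrightarrow> adj G i j)"
  shows "induced_embeds G H"
proof -
  have h: "\<And>i j. i < length xs \<Longrightarrow> j < length xs \<Longrightarrow> i < j \<Longrightarrow>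
              (adj H (xs!i) (xs!j) \<longleftrightarrow> adj G i j)" using h0 ln by blast
  have sym: "\<And>x y. adj H x y \<Longrightarrow> adj H y x" and irr: "\<And>x. \<not> adj H x x"
    using sg unfolding simple_graph_def by auto
  show ?thesis unfolding induced_embeds_def
  proof (intro exI[of _ "(!) xs"] conjI ballI)
    show "inj_on ((!) xs) (verts G)"
      using d vG ln by (simp add: inj_on_def nth_eq_iff_index_eq)
    show "(!) xs ` verts G \<subseteq> verts H"
      using s vG ln by auto
    fix x y assume x: "x \<in> verts G" and y: "y \<in> verts G"
    then have xl: "x < length xs" and yl: "y < length xs" using vG ln by auto
    consider "x < y" | "x = y" | "y < x" by arith
    then show "adj H (xs ! x) (xs ! y) = adj G x y"
    proof cases
      case 1 then show ?thesis using h[OF xl yl] by auto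
    next
      case 2 then show ?thesis using irr irrG by simp
    next
      case 3 then show ?thesis using h[OF yl xl] sym symG by blast
    qed
  qed
qed

lemma mk_graph_verts: "verts (mk_graph n P) = {0..<n}" by (simp add: mk_graph_def verts_def)
lemma mk_graph_sym: "adj (mk_graph n P) i j \<Longrightarrow> adj (mk_graph n P) j i" by (auto simp: mk_graph_def adj_def)
lemma mk_graph_irr: "\<not> adj (mk_graph n P) i i" by (auto simp: mk_graph_def adj_def)

lemma all_lt1: "(\<forall>i<(1::nat). Q i) \<longleftrightarrow> Q 0" by auto
lemma all_lt2: "(\<forall>i<(2::nat). Q i) \<longleftrightarrow> Q 0 \<and> Q 1" by (simp add: numeral_eq_Suc All_less_Suc2)
lemma all_lt3: "(\<forall>i<(3::nat). Q i) \<longleftrightarrow> Q 0 \<and> Q 1 \<and> Q 2" by (simp add: numeral_eq_Suc All_less_Suc2)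
lemma all_lt4: "(\<forall>i<(4::nat). Q i) \<longleftrightarrow> Q 0 \<and> Q 1 \<and> Q 2 \<and> Q 3" by (simp add: numeral_eq_Suc All_less_Suc2)
lemma all_lt5: "(\<forall>i<(5::nat). Q i) \<longleftrightarrow> Q 0 \<and> Q 1 \<and> Q 2 \<and> Q 3 \<and> Q 4" by (simp add: numeral_eq_Suc All_less_Suc2)
lemma all_lt6: "(\<forall>i<(6::nat). Q i) \<longleftrightarrow> Q 0 \<and> Q 1 \<and> Q 2 \<and> Q 3 \<and> Q 4 \<and> Q 5" by (simp add: numeral_eq_Suc All_less_Suc2)
lemma all_lt7: "(\<forall>i<(7::nat). Q i) \<longleftrightarrow> Q 0 \<and> Q 1 \<and> Q 2 \<and> Q 3 \<and> Q 4 \<and> Q 5 \<and> Q 6" by (simp add: numeral_eq_Suc All_less_Suc2)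
lemma all_lt8: "(\<forall>i<(8::nat). Q i) \<longleftrightarrow> Q 0 \<and> Q 1 \<and> Q 2 \<and> Q 3 \<and> Q 4 \<and> Q 5 \<and> Q 6 \<and> Q 7" by (simp add: numeral_eq_Suc All_less_Suc2)
lemmas all_lts = all_lt1 all_lt2 all_lt3 all_lt4 all_lt5 all_lt6 all_lt7 all_lt8

lemma mk_self: "mk_graph n (\<lambda>x y. adj (mk_graph n P) x y) = mk_graph n P"
  by (auto simp: mk_graph_def adj_def fun_eq_iff)

lemma fe_sym: "fe H x y \<Longrightarrow> simple_graph H \<Longrightarrow> fe H y x"
  unfolding fe_def simple_graph_def by auto

locale fgr =
  fixes H :: "'a graph"
  assumes sg: "simple_graph H" and fr: "Free N_graphs H"
begin

lemma adj_fe: "x \<in> verts H \<Longrightarrow> y \<in> verts H \<Longrightarrow> x \<noteq> y \<Longrightarrow> adj H x y \<longleftrightarrow> \<not> fe H x y"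
  unfolding fe_def by auto

lemma adj_sym: "adj H x y \<longleftrightarrow> adj H y x"
  using sg unfolding simple_graph_def by auto

lemma cc3_emb:
  assumes "v0 \<in> verts H" "v1 \<in> verts H" "v2 \<in> verts H"
    and "distinct [v0,v1,v2]"
    and "\<not> adj H v0 v1"
    and "\<not> adj H v0 v2"
    and "\<not> adj H v1 v2"
  shows False
proof -
  have "induced_embeds (co_cycle 3) H"
    apply (rule embed_gen[OF sg, of "[v0,v1,v2]" 3])
    using assms apply simp
    using assms apply simp
    apply simp
    apply (simp add: co_cycle_def mk_graph_verts)
    apply (simp add: co_cycle_def mk_graph_sym)
    apply (simp add: co_cycle_def mk_graph_irr)
    using assms by (simp add: all_lts adj_sym co_cycle_def mk_graph_def adj_def)
  then show False using fr by (simp add: Free_def N_graphs_def)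
qed

lemma G1_emb:
  assumes "v0 \<in> verts H" "v1 \<in> verts H" "v2 \<in> verts H" "v3 \<in> verts H" "v4 \<in> verts H" "v5 \<in> verts H"
    and "distinct [v0,v1,v2,v3,v4,v5]"
    and "adj H v0 v1"
    and "\<not> adj H v0 v2"
    and "\<not> adj H v0 v3"
    and "adj H v0 v4"
    and "adj H v0 v5"
    and "adj H v1 v2"
    and "\<not> adj H v1 v3"
    and "adj H v1 v4"
    and "adj H v1 v5"
    and "adj H v2 v3"
    and "adj H v2 v4"
    and "adj H v2 v5"
    and "adj H v3 v4"
    and "adj H v3 v5"
    and "adj H v4 v5"
  shows False
proof -
  have "induced_embeds (G1) H"
    apply (rule embed_gen[OF sg, of "[v0,v1,v2,v3,v4,v5]" 6])
    using assms apply simp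
    using assms apply simp
    apply simp
    apply (simp add: G1_def join_K2_def mk_graph_verts)
    apply (simp add: G1_def join_K2_def mk_graph_sym)
    apply (simp add: G1_def join_K2_def mk_graph_irr)
    using assms by (simp add: all_lts adj_sym G1_def join_K2_def mk_graph_def adj_def)
  then show False using fr by (simp add: Free_def N_graphs_def)
qed

lemma G2_emb:
  assumes "v0 \<in> verts H" "v1 \<in> verts H" "v2 \<in> verts H" "v3 \<in> verts H" "v4 \<in> verts H" "v5 \<in> verts H"
    and "distinct [v0,v1,v2,v3,v4,v5]"
    and "adj H v0 v1"
    and "\<not> adj H v0 v2"
    and "adj H v0 v3"
    and "adj H v0 v4"
    and "adj H v0 v5"
    and "adj H v1 v2"
    and "\<not> adj H v1 v3"
    and "adj H v1 v4"
    and "adj H v1 v5"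
    and "adj H v2 v3"
    and "adj H v2 v4"
    and "adj H v2 v5"
    and "adj H v3 v4"
    and "adj H v3 v5"
    and "adj H v4 v5"
  shows False
proof -
  have "induced_embeds (G2) H"
    apply (rule embed_gen[OF sg, of "[v0,v1,v2,v3,v4,v5]" 6])
    using assms apply simp
    using assms apply simp
    apply simp
    apply (simp add: G2_def join_K2_def mk_graph_verts)
    apply (simp add: G2_def join_K2_def mk_graph_sym)
    apply (simp add: G2_def join_K2_def mk_graph_irr)
    using assms by (simp add: all_lts adj_sym G2_def join_K2_def mk_graph_def adj_def)
  then show False using fr by (simp add: Free_def N_graphs_def)
qed

lemma G3_emb:
  assumes "v0 \<in> verts H" "v1 \<in> verts H" "v2 \<in> verts H" "v3 \<in> verts H" "v4 \<in> verts H" "v5 \<in> verts H"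
    and "distinct [v0,v1,v2,v3,v4,v5]"
    and "adj H v0 v1"
    and "\<not> adj H v0 v2"
    and "\<not> adj H v0 v3"
    and "adj H v0 v4"
    and "adj H v0 v5"
    and "\<not> adj H v1 v2"
    and "\<not> adj H v1 v3"
    and "adj H v1 v4"
    and "adj H v1 v5"
    and "adj H v2 v3"
    and "adj H v2 v4"
    and "adj H v2 v5"
    and "adj H v3 v4"
    and "adj H v3 v5"
    and "adj H v4 v5"
  shows False
proof -
  have "induced_embeds (G3) H"
    apply (rule embed_gen[OF sg, of "[v0,v1,v2,v3,v4,v5]" 6])
    using assms apply simp
    using assms apply simp
    apply simp
    apply (simp add: G3_def join_K2_def mk_graph_verts)
    apply (simp add: G3_def join_K2_def mk_graph_sym)
    apply (simp add: G3_def join_K2_def mk_graph_irr)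
    using assms by (simp add: all_lts adj_sym G3_def join_K2_def mk_graph_def adj_def)
  then show False using fr by (simp add: Free_def N_graphs_def)
qed

lemma G4_emb:
  assumes "v0 \<in> verts H" "v1 \<in> verts H" "v2 \<in> verts H" "v3 \<in> verts H" "v4 \<in> verts H" "v5 \<in> verts H"
    and "distinct [v0,v1,v2,v3,v4,v5]"
    and "adj H v0 v1"
    and "adj H v0 v2"
    and "adj H v0 v3"
    and "\<not> adj H v0 v4"
    and "adj H v0 v5"
    and "adj H v1 v2"
    and "adj H v1 v3"
    and "adj H v1 v4"
    and "\<not> adj H v1 v5"
    and "adj H v2 v3"
    and "adj H v2 v4"
    and "\<not> adj H v2 v5"
    and "\<not> adj H v3 v4"
    and "adj H v3 v5"
    and "\<not> adj H v4 v5"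
  shows False
proof -
  have "induced_embeds (G4) H"
    apply (rule embed_gen[OF sg, of "[v0,v1,v2,v3,v4,v5]" 6])
    using assms apply simp
    using assms apply simp
    apply simp
    apply (simp add: G4_def mk_graph_verts)
    apply (simp add: G4_def mk_graph_sym)
    apply (simp add: G4_def mk_graph_irr)
    using assms by (simp add: all_lts adj_sym G4_def mk_graph_def adj_def)
  then show False using fr by (simp add: Free_def N_graphs_def)
qed

lemma G5k0_emb:
  assumes "v0 \<in> verts H" "v1 \<in> verts H" "v2 \<in> verts H" "v3 \<in> verts H" "v4 \<in> verts H" "v5 \<in> verts H" "v6 \<in> verts H" "v7 \<in> verts H"
    and "distinct [v0,v1,v2,v3,v4,v5,v6,v7]"
    and "adj H v0 v1"
    and "adj H v0 v2"
    and "adj H v0 v3"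
    and "\<not> adj H v0 v4"
    and "adj H v0 v5"
    and "adj H v0 v6"
    and "adj H v0 v7"
    and "adj H v1 v2"
    and "adj H v1 v3"
    and "adj H v1 v4"
    and "\<not> adj H v1 v5"
    and "\<not> adj H v1 v6"
    and "\<not> adj H v1 v7"
    and "adj H v2 v3"
    and "adj H v2 v4"
    and "\<not> adj H v2 v5"
    and "\<not> adj H v2 v6"
    and "\<not> adj H v2 v7"
    and "adj H v3 v4"
    and "\<not> adj H v3 v5"
    and "\<not> adj H v3 v6"
    and "\<not> adj H v3 v7"
    and "adj H v4 v5"
    and "adj H v4 v6"
    and "adj H v4 v7"
    and "adj H v5 v6"
    and "adj H v5 v7"
    and "adj H v6 v7"
  shows False
proof -
  have "induced_embeds (G5k 0) H"
    apply (rule embed_gen[OF sg, of "[v0,v1,v2,v3,v4,v5,v6,v7]" 8])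
    using assms apply simp
    using assms apply simp
    apply simp
    apply (simp add: G5k_def mk_graph_verts)
    apply (simp add: G5k_def mk_graph_sym)
    apply (simp add: G5k_def mk_graph_irr)
    using assms by (simp add: all_lts adj_sym G5k_def mk_graph_def adj_def)
  then show False using fr by (simp add: Free_def N_graphs_def)
qed

lemma G5k1_emb:
  assumes "v0 \<in> verts H" "v1 \<in> verts H" "v2 \<in> verts H" "v3 \<in> verts H" "v4 \<in> verts H" "v5 \<in> verts H" "v6 \<in> verts H" "v7 \<in> verts H"
    and "distinct [v0,v1,v2,v3,v4,v5,v6,v7]"
    and "adj H v0 v1"
    and "adj H v0 v2"
    and "adj H v0 v3"
    and "\<not> adj H v0 v4"
    and "adj H v0 v5"
    and "adj H v0 v6"
    and "adj H v0 v7"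
    and "adj H v1 v2"
    and "adj H v1 v3"
    and "adj H v1 v4"
    and "adj H v1 v5"
    and "\<not> adj H v1 v6"
    and "\<not> adj H v1 v7"
    and "adj H v2 v3"
    and "adj H v2 v4"
    and "\<not> adj H v2 v5"
    and "\<not> adj H v2 v6"
    and "\<not> adj H v2 v7"
    and "adj H v3 v4"
    and "\<not> adj H v3 v5"
    and "\<not> adj H v3 v6"
    and "\<not> adj H v3 v7"
    and "adj H v4 v5"
    and "adj H v4 v6"
    and "adj H v4 v7"
    and "adj H v5 v6"
    and "adj H v5 v7"
    and "adj H v6 v7"
  shows False
proof -
  have "induced_embeds (G5k 1) H"
    apply (rule embed_gen[OF sg, of "[v0,v1,v2,v3,v4,v5,v6,v7]" 8])
    using assms apply simp
    using assms apply simp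
    apply simp
    apply (simp add: G5k_def mk_graph_verts)
    apply (simp add: G5k_def mk_graph_sym)
    apply (simp add: G5k_def mk_graph_irr)
    using assms by (simp add: all_lts adj_sym G5k_def mk_graph_def adj_def)
  then show False using fr by (simp add: Free_def N_graphs_def)
qed

lemma G5k2_emb:
  assumes "v0 \<in> verts H" "v1 \<in> verts H" "v2 \<in> verts H" "v3 \<in> verts H" "v4 \<in> verts H" "v5 \<in> verts H" "v6 \<in> verts H" "v7 \<in> verts H"
    and "distinct [v0,v1,v2,v3,v4,v5,v6,v7]"
    and "adj H v0 v1"
    and "adj H v0 v2"
    and "adj H v0 v3"
    and "\<not> adj H v0 v4"
    and "adj H v0 v5"
    and "adj H v0 v6"
    and "adj H v0 v7"
    and "adj H v1 v2"
    and "adj H v1 v3"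
    and "adj H v1 v4"
    and "adj H v1 v5"
    and "\<not> adj H v1 v6"
    and "\<not> adj H v1 v7"
    and "adj H v2 v3"
    and "adj H v2 v4"
    and "\<not> adj H v2 v5"
    and "adj H v2 v6"
    and "\<not> adj H v2 v7"
    and "adj H v3 v4"
    and "\<not> adj H v3 v5"
    and "\<not> adj H v3 v6"
    and "\<not> adj H v3 v7"
    and "adj H v4 v5"
    and "adj H v4 v6"
    and "adj H v4 v7"
    and "adj H v5 v6"
    and "adj H v5 v7"
    and "adj H v6 v7"
  shows False
proof -
  have "induced_embeds (G5k 2) H"
    apply (rule embed_gen[OF sg, of "[v0,v1,v2,v3,v4,v5,v6,v7]" 8])
    using assms apply simp
    using assms apply simp
    apply simp
    apply (simp add: G5k_def mk_graph_verts)
    apply (simp add: G5k_def mk_graph_sym)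
    apply (simp add: G5k_def mk_graph_irr)
    using assms by (simp add: all_lts adj_sym G5k_def mk_graph_def adj_def)
  then show False using fr by (simp add: Free_def N_graphs_def)
qed

lemma G5k3_emb:
  assumes "v0 \<in> verts H" "v1 \<in> verts H" "v2 \<in> verts H" "v3 \<in> verts H" "v4 \<in> verts H" "v5 \<in> verts H" "v6 \<in> verts H" "v7 \<in> verts H"
    and "distinct [v0,v1,v2,v3,v4,v5,v6,v7]"
    and "adj H v0 v1"
    and "adj H v0 v2"
    and "adj H v0 v3"
    and "\<not> adj H v0 v4"
    and "adj H v0 v5"
    and "adj H v0 v6"
    and "adj H v0 v7"
    and "adj H v1 v2"
    and "adj H v1 v3"
    and "adj H v1 v4"
    and "adj H v1 v5"
    and "\<not> adj H v1 v6"
    and "\<not> adj H v1 v7"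
    and "adj H v2 v3"
    and "adj H v2 v4"
    and "\<not> adj H v2 v5"
    and "adj H v2 v6"
    and "\<not> adj H v2 v7"
    and "adj H v3 v4"
    and "\<not> adj H v3 v5"
    and "\<not> adj H v3 v6"
    and "adj H v3 v7"
    and "adj H v4 v5"
    and "adj H v4 v6"
    and "adj H v4 v7"
    and "adj H v5 v6"
    and "adj H v5 v7"
    and "adj H v6 v7"
  shows False
proof -
  have "induced_embeds (G5k 3) H"
    apply (rule embed_gen[OF sg, of "[v0,v1,v2,v3,v4,v5,v6,v7]" 8])
    using assms apply simp
    using assms apply simp
    apply simp
    apply (simp add: G5k_def mk_graph_verts)
    apply (simp add: G5k_def mk_graph_sym)
    apply (simp add: G5k_def mk_graph_irr)
    using assms by (simp add: all_lts adj_sym G5k_def mk_graph_def adj_def)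
  then show False using fr by (simp add: Free_def N_graphs_def)
qed


lemma fe_commute: "fe H x y \<longleftrightarrow> fe H y x"
  using sg unfolding fe_def simple_graph_def by auto

lemma fe_V1: "fe H x y \<Longrightarrow> x \<in> verts H" and fe_V2: "fe H x y \<Longrightarrow> y \<in> verts H"
  and fe_ne: "fe H x y \<Longrightarrow> x \<noteq> y"
  unfolding fe_def by auto

lemma fe_irr: "\<not> fe H x x" unfolding fe_def by auto

lemma no_tri: assumes "fe H a b" "fe H b c" "fe H a c" shows False
  apply (rule cc3_emb[of a b c]) using assms unfolding fe_def by auto

lemma F_2K2:
  assumes V: "a \<in> verts H" "b \<in> verts H" "c \<in> verts H" "d \<in> verts H" "u \<in> verts H" "v \<in> verts H"
    and d: "distinct [a,b,c,d,u,v]"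
    and "fe H a b" "fe H c d" "\<not> fe H a c" "\<not> fe H a d" "\<not> fe H b c" "\<not> fe H b d"
    and "\<not> fe H u a" "\<not> fe H u b" "\<not> fe H u c" "\<not> fe H u d"
    and "\<not> fe H v a" "\<not> fe H v b" "\<not> fe H v c" "\<not> fe H v d" "\<not> fe H u v"
  shows False
  by (rule G2_emb[of a c b d u v]) (use assms in \<open>auto simp: adj_fe fe_commute\<close>)

lemma F_P4:
  assumes V: "a \<in> verts H" "b \<in> verts H" "c \<in> verts H" "d \<in> verts H" "u \<in> verts H" "v \<in> verts H"
    and d: "distinct [a,b,c,d,u,v]"
    and "fe H a b" "fe H b c" "fe H c d" "\<not> fe H a c" "\<not> fe H a d" "\<not> fe H b d"
    and "\<not> fe H u a" "\<not> fe H u b" "\<not> fe H u c" "\<not> fe H u d"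
    and "\<not> fe H v a" "\<not> fe H v b" "\<not> fe H v c" "\<not> fe H v d" "\<not> fe H u v"
  shows False
  by (rule G1_emb[of c a d b u v]) (use assms in \<open>auto simp: adj_fe fe_commute\<close>)

lemma F_C4:
  assumes V: "a \<in> verts H" "b \<in> verts H" "c \<in> verts H" "d \<in> verts H" "u \<in> verts H" "v \<in> verts H"
    and d: "distinct [a,b,c,d,u,v]"
    and "fe H a b" "fe H b c" "fe H c d" "fe H d a" "\<not> fe H a c" "\<not> fe H b d"
    and "\<not> fe H u a" "\<not> fe H u b" "\<not> fe H u c" "\<not> fe H u d"
    and "\<not> fe H v a" "\<not> fe H v b" "\<not> fe H v c" "\<not> fe H v d" "\<not> fe H u v"
  shows False
  by (rule G3_emb[of a c b d u v]) (use assms in \<open>auto simp: adj_fe fe_commute\<close>)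

lemma S_config:
  assumes e1: "fe H x1 y1" and e2: "fe H x2 y2" and d: "distinct [x1,y1,x2,y2,u,v]"
    and V: "u \<in> verts H" "v \<in> verts H"
    and n: "\<not> fe H u x1" "\<not> fe H u y1" "\<not> fe H u x2" "\<not> fe H u y2"
      "\<not> fe H v x1" "\<not> fe H v y1" "\<not> fe H v x2" "\<not> fe H v y2" "\<not> fe H u v"
  shows False
proof -
  have V4: "x1 \<in> verts H" "y1 \<in> verts H" "x2 \<in> verts H" "y2 \<in> verts H"
    using e1 e2 by (auto simp: fe_V1 fe_V2)
  have dd: "x1 \<noteq> y1" "x1 \<noteq> x2" "x1 \<noteq> y2" "x1 \<noteq> u" "x1 \<noteq> v" "y1 \<noteq> x1" "y1 \<noteq> x2" "y1 \<noteq> y2" "y1 \<noteq> u" "y1 \<noteq> v" "x2 \<noteq> x1" "x2 \<noteq> y1" "x2 \<noteq> y2" "x2 \<noteq> u" "x2 \<noteq> v" "y2 \<noteq> x1" "y2 \<noteq> y1" "y2 \<noteq> x2" "y2 \<noteq> u" "y2 \<noteq> v" "u \<noteq> x1" "u \<noteq> y1" "u \<noteq> x2" "u \<noteq> y2" "u \<noteq> v" "v \<noteq> x1" "v \<noteq> y1" "v \<noteq> x2" "v \<noteq> y2" "v \<noteq> u" using d by auto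
  have e2': "fe H y2 x2" using e2 fe_commute by simp
  have t1: "fe H x1 x2 \<Longrightarrow> \<not> fe H y1 x2 \<and> \<not> fe H x1 y2" using no_tri[of x1 y1 x2] no_tri[of x1 x2 y2] e1 e2 by blast
  have t2: "fe H y1 y2 \<Longrightarrow> \<not> fe H x1 y2 \<and> \<not> fe H y1 x2" using no_tri[of x1 y1 y2] no_tri[of y1 y2 x2] e1 e2' by blast
  have t3: "fe H x1 y2 \<Longrightarrow> \<not> fe H y1 y2 \<and> \<not> fe H x1 x2" using no_tri[of x1 y1 y2] no_tri[of x1 x2 y2] e1 e2 by blast
  have t4: "fe H y1 x2 \<Longrightarrow> \<not> fe H x1 x2 \<and> \<not> fe H y1 y2" using no_tri[of x1 y1 x2] no_tri[of y1 y2 x2] e1 e2' by blast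
  note base = V V4 dd n e1 e2
  consider (a) "fe H x1 x2" "fe H y1 y2" | (b) "fe H x1 x2" "\<not> fe H y1 y2"
    | (c) "\<not> fe H x1 x2" "fe H x1 y2" "fe H y1 x2" | (d) "\<not> fe H x1 x2" "fe H x1 y2" "\<not> fe H y1 x2"
    | (e) "\<not> fe H x1 x2" "\<not> fe H x1 y2" "fe H y1 x2"
    | (f) "\<not> fe H x1 x2" "\<not> fe H x1 y2" "\<not> fe H y1 x2" "fe H y1 y2"
    | (g) "\<not> fe H x1 x2" "\<not> fe H x1 y2" "\<not> fe H y1 x2" "\<not> fe H y1 y2" by blast
  then show False
  proof cases
    case a
    have "\<not> fe H y1 x2" "\<not> fe H x1 y2" using t1 a by auto
    then show False apply (rule_tac F_C4[of x1 x2 y2 y1 u v]) using base a by (simp_all add: fe_commute)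
  next
    case b
    have "\<not> fe H y1 x2" "\<not> fe H x1 y2" using t1 b by auto
    then show False apply (rule_tac F_P4[of y1 x1 x2 y2 u v]) using base b by (simp_all add: fe_commute)
  next
    case c
    have "\<not> fe H y1 y2" using t3 c by auto
    then show False apply (rule_tac F_C4[of x1 y2 x2 y1 u v]) using base c by (simp_all add: fe_commute)
  next
    case d
    have "\<not> fe H y1 y2" using t3 d by auto
    then show False apply (rule_tac F_P4[of y1 x1 y2 x2 u v]) using base d by (simp_all add: fe_commute)
  next
    case e
    have "\<not> fe H y1 y2" using t4 e by auto
    then show False apply (rule_tac F_P4[of x1 y1 x2 y2 u v]) using base e by (simp_all add: fe_commute)
  next
    case f
    then show False apply (rule_tac F_P4[of x1 y1 y2 x2 u v]) using base f by (simp_all add: fe_commute)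
  next
    case g
    then show False apply (rule_tac F_2K2[of x1 y1 x2 y2 u v]) using base g by (simp_all add: fe_commute)
  qed
qed

lemma T_config:
  assumes V: "a \<in> verts H" "b \<in> verts H" "c \<in> verts H" "d \<in> verts H" "e \<in> verts H" "f \<in> verts H" and d: "distinct [a,b,c,d,e,f]"
    and "fe H e f" "fe H e a" "fe H e d" "fe H f b" "fe H f c"
    and "\<not> fe H a b" "\<not> fe H a c" "\<not> fe H a d" "\<not> fe H a f" "\<not> fe H b c"
        "\<not> fe H b d" "\<not> fe H b e" "\<not> fe H c d" "\<not> fe H c e" "\<not> fe H d f"
  shows False
  apply (rule G4_emb[of a b c d e f]) using assms by (simp_all add: adj_fe fe_commute)

lemma K0_config:
  assumes V: "x \<in> verts H" "p1 \<in> verts H" "p2 \<in> verts H" "p3 \<in> verts H" "y \<in> verts H" "q1 \<in> verts H" "q2 \<in> verts H" "q3 \<in> verts H" and d: "distinct [x,p1,p2,p3,y,q1,q2,q3]"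
    and "fe H x y" "fe H p1 q1" "fe H p1 q2" "fe H p1 q3" "fe H p2 q1" "fe H p2 q2" "fe H p2 q3" "fe H p3 q1" "fe H p3 q2" "fe H p3 q3"
    and "\<not> fe H x p1" "\<not> fe H x p2" "\<not> fe H x p3" "\<not> fe H p1 p2" "\<not> fe H p1 p3" "\<not> fe H p2 p3" "\<not> fe H y q1" "\<not> fe H y q2" "\<not> fe H y q3" "\<not> fe H q1 q2" "\<not> fe H q1 q3" "\<not> fe H q2 q3" "\<not> fe H x q1" "\<not> fe H x q2" "\<not> fe H x q3" "\<not> fe H y p1" "\<not> fe H y p2" "\<not> fe H y p3"
  shows False
  apply (rule G5k0_emb[of x p1 p2 p3 y q1 q2 q3]) using assms by (simp_all add: adj_fe fe_commute)

lemma K1_config: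
  assumes V: "x \<in> verts H" "p1 \<in> verts H" "p2 \<in> verts H" "p3 \<in> verts H" "y \<in> verts H" "q1 \<in> verts H" "q2 \<in> verts H" "q3 \<in> verts H" and d: "distinct [x,p1,p2,p3,y,q1,q2,q3]"
    and "fe H x y" "fe H p1 q2" "fe H p1 q3" "fe H p2 q1" "fe H p2 q2" "fe H p2 q3" "fe H p3 q1" "fe H p3 q2" "fe H p3 q3"
    and "\<not> fe H x p1" "\<not> fe H x p2" "\<not> fe H x p3" "\<not> fe H p1 p2" "\<not> fe H p1 p3" "\<not> fe H p2 p3" "\<not> fe H y q1" "\<not> fe H y q2" "\<not> fe H y q3" "\<not> fe H q1 q2" "\<not> fe H q1 q3" "\<not> fe H q2 q3" "\<not> fe H x q1" "\<not> fe H x q2" "\<not> fe H x q3" "\<not> fe H y p1" "\<not> fe H y p2" "\<not> fe H y p3" "\<not> fe H p1 q1"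
  shows False
  apply (rule G5k1_emb[of x p1 p2 p3 y q1 q2 q3]) using assms by (simp_all add: adj_fe fe_commute)

lemma K2_config:
  assumes V: "x \<in> verts H" "p1 \<in> verts H" "p2 \<in> verts H" "p3 \<in> verts H" "y \<in> verts H" "q1 \<in> verts H" "q2 \<in> verts H" "q3 \<in> verts H" and d: "distinct [x,p1,p2,p3,y,q1,q2,q3]"
    and "fe H x y" "fe H p1 q2" "fe H p1 q3" "fe H p2 q1" "fe H p2 q3" "fe H p3 q1" "fe H p3 q2" "fe H p3 q3"
    and "\<not> fe H x p1" "\<not> fe H x p2" "\<not> fe H x p3" "\<not> fe H p1 p2" "\<not> fe H p1 p3" "\<not> fe H p2 p3" "\<not> fe H y q1" "\<not> fe H y q2" "\<not> fe H y q3" "\<not> fe H q1 q2" "\<not> fe H q1 q3" "\<not> fe H q2 q3" "\<not> fe H x q1" "\<not> fe H x q2" "\<not> fe H x q3" "\<not> fe H y p1" "\<not> fe H y p2" "\<not> fe H y p3" "\<not> fe H p1 q1" "\<not> fe H p2 q2"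
  shows False
  apply (rule G5k2_emb[of x p1 p2 p3 y q1 q2 q3]) using assms by (simp_all add: adj_fe fe_commute)

lemma K3_config:
  assumes V: "x \<in> verts H" "p1 \<in> verts H" "p2 \<in> verts H" "p3 \<in> verts H" "y \<in> verts H" "q1 \<in> verts H" "q2 \<in> verts H" "q3 \<in> verts H" and d: "distinct [x,p1,p2,p3,y,q1,q2,q3]"
    and "fe H x y" "fe H p1 q2" "fe H p1 q3" "fe H p2 q1" "fe H p2 q3" "fe H p3 q1" "fe H p3 q2"
    and "\<not> fe H x p1" "\<not> fe H x p2" "\<not> fe H x p3" "\<not> fe H p1 p2" "\<not> fe H p1 p3" "\<not> fe H p2 p3" "\<not> fe H y q1" "\<not> fe H y q2" "\<not> fe H y q3" "\<not> fe H q1 q2" "\<not> fe H q1 q3" "\<not> fe H q2 q3" "\<not> fe H x q1" "\<not> fe H x q2" "\<not> fe H x q3" "\<not> fe H y p1" "\<not> fe H y p2" "\<not> fe H y p3" "\<not> fe H p1 q1" "\<not> fe H p2 q2" "\<not> fe H p3 q3"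
  shows False
  apply (rule G5k3_emb[of x p1 p2 p3 y q1 q2 q3]) using assms by (simp_all add: adj_fe fe_commute)

lemma K_gen:
  assumes V: "x \<in> verts H" "p1 \<in> verts H" "p2 \<in> verts H" "p3 \<in> verts H" "y \<in> verts H" "q1 \<in> verts H" "q2 \<in> verts H" "q3 \<in> verts H" and d: "distinct [x,p1,p2,p3,y,q1,q2,q3]"
    and "fe H x y" "fe H p1 q2" "fe H p1 q3" "fe H p2 q1" "fe H p2 q3" "fe H p3 q1" "fe H p3 q2"
    and "\<not> fe H x p1" "\<not> fe H x p2" "\<not> fe H x p3" "\<not> fe H p1 p2" "\<not> fe H p1 p3" "\<not> fe H p2 p3" "\<not> fe H y q1" "\<not> fe H y q2" "\<not> fe H y q3" "\<not> fe H q1 q2" "\<not> fe H q1 q3" "\<not> fe H q2 q3" "\<not> fe H x q1" "\<not> fe H x q2" "\<not> fe H x q3" "\<not> fe H y p1" "\<not> fe H y p2" "\<not> fe H y p3"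
  shows False
proof -
  have dd: "x \<noteq> p1" "x \<noteq> p2" "x \<noteq> p3" "x \<noteq> y" "x \<noteq> q1" "x \<noteq> q2" "x \<noteq> q3" "p1 \<noteq> x" "p1 \<noteq> p2" "p1 \<noteq> p3" "p1 \<noteq> y" "p1 \<noteq> q1" "p1 \<noteq> q2" "p1 \<noteq> q3" "p2 \<noteq> x" "p2 \<noteq> p1" "p2 \<noteq> p3" "p2 \<noteq> y" "p2 \<noteq> q1" "p2 \<noteq> q2" "p2 \<noteq> q3" "p3 \<noteq> x" "p3 \<noteq> p1" "p3 \<noteq> p2" "p3 \<noteq> y" "p3 \<noteq> q1" "p3 \<noteq> q2" "p3 \<noteq> q3" "y \<noteq> x" "y \<noteq> p1" "y \<noteq> p2" "y \<noteq> p3" "y \<noteq> q1" "y \<noteq> q2" "y \<noteq> q3" "q1 \<noteq> x" "q1 \<noteq> p1" "q1 \<noteq> p2" "q1 \<noteq> p3" "q1 \<noteq> y" "q1 \<noteq> q2" "q1 \<noteq> q3" "q2 \<noteq> x" "q2 \<noteq> p1" "q2 \<noteq> p2" "q2 \<noteq> p3" "q2 \<noteq> y" "q2 \<noteq> q1" "q2 \<noteq> q3" "q3 \<noteq> x" "q3 \<noteq> p1" "q3 \<noteq> p2" "q3 \<noteq> p3" "q3 \<noteq> y" "q3 \<noteq> q1" "q3 \<noteq> q2" using d by auto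
  note base = assms dd
  show False
  proof (cases "fe H p1 q1"; cases "fe H p2 q2"; cases "fe H p3 q3")
    assume "fe H p1 q1" and "fe H p2 q2" and "fe H p3 q3"
    then show False apply (rule_tac K0_config[of x p1 p2 p3 y q1 q2 q3]) using base by (simp_all add: fe_commute)
  next
    assume "fe H p1 q1" and "fe H p2 q2" and "\<not> fe H p3 q3"
    then show False apply (rule_tac K1_config[of x p3 p1 p2 y q3 q1 q2]) using base by (simp_all add: fe_commute)
  next
    assume "fe H p1 q1" and "\<not> fe H p2 q2" and "fe H p3 q3"
    then show False apply (rule_tac K1_config[of x p2 p1 p3 y q2 q1 q3]) using base by (simp_all add: fe_commute)
  next
    assume "fe H p1 q1" and "\<not> fe H p2 q2" and "\<not> fe H p3 q3"
    then show False apply (rule_tac K2_config[of x p2 p3 p1 y q2 q3 q1]) using base by (simp_all add: fe_commute)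
  next
    assume "\<not> fe H p1 q1" and "fe H p2 q2" and "fe H p3 q3"
    then show False apply (rule_tac K1_config[of x p1 p2 p3 y q1 q2 q3]) using base by (simp_all add: fe_commute)
  next
    assume "\<not> fe H p1 q1" and "fe H p2 q2" and "\<not> fe H p3 q3"
    then show False apply (rule_tac K2_config[of x p1 p3 p2 y q1 q3 q2]) using base by (simp_all add: fe_commute)
  next
    assume "\<not> fe H p1 q1" and "\<not> fe H p2 q2" and "fe H p3 q3"
    then show False apply (rule_tac K2_config[of x p1 p2 p3 y q1 q2 q3]) using base by (simp_all add: fe_commute)
  next
    assume "\<not> fe H p1 q1" and "\<not> fe H p2 q2" and "\<not> fe H p3 q3"
    then show False apply (rule_tac K3_config[of x p1 p2 p3 y q1 q2 q3]) using base by (simp_all add: fe_commute)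
  qed
qed

end



definition walk :: "('a \<Rightarrow> 'a \<Rightarrow> bool) \<Rightarrow> (nat \<Rightarrow> 'a) \<Rightarrow> nat \<Rightarrow> bool" where
  "walk R c n \<longleftrightarrow> (\<forall>i<n. R (c i) (c (Suc i)))"

definition W :: "('a \<Rightarrow> 'a \<Rightarrow> bool) \<Rightarrow> 'a \<Rightarrow> 'a \<Rightarrow> nat \<Rightarrow> bool" where
  "W R u v n \<longleftrightarrow> (\<exists>c. c 0 = u \<and> c n = v \<and> walk R c n)"

lemma W_0: "W R u u 0" unfolding W_def walk_def by (rule exI[of _ "\<lambda>_. u"]) simp

lemma W_edge: "R u v \<Longrightarrow> W R u v 1"
  unfolding W_def walk_def by (rule exI[of _ "\<lambda>i. if i = 0 then u else v"]) simp

lemma W_trans: assumes "W R u v n" "W R v w m" shows "W R u w (n + m)"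
proof -
  obtain c1 where c1: "c1 0 = u" "c1 n = v" "walk R c1 n" using assms(1) unfolding W_def by blast
  obtain c2 where c2: "c2 0 = v" "c2 m = w" "walk R c2 m" using assms(2) unfolding W_def by blast
  define c where "c i = (if i \<le> n then c1 i else c2 (i - n))" for i
  have "walk R c (n + m)" unfolding walk_def
  proof (intro allI impI)
    fix i assume i: "i < n + m"
    show "R (c i) (c (Suc i))"
    proof (cases "i < n")
      case True then show ?thesis using c1(3) by (simp add: c_def walk_def)
    next
      case False
      then have "i - n < m" using i by arith
      then have "R (c2 (i - n)) (c2 (Suc (i - n)))" using c2(3) by (simp add: walk_def)
      moreover have "Suc i - n = Suc (i - n)" using False by arith
      ultimately show ?thesis using False c1(2) c2(1) by (cases "i = n") (auto simp: c_def)
    qed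
  qed
  moreover have "c 0 = u" "c (n + m) = w" using c1 c2 by (auto simp: c_def)
  ultimately show ?thesis unfolding W_def by blast
qed

lemma W_rev: assumes "symp R" "W R u v n" shows "W R v u n"
proof -
  obtain c where c: "c 0 = u" "c n = v" "walk R c n" using assms(2) unfolding W_def by blast
  have "walk R (\<lambda>i. c (n - i)) n" unfolding walk_def
  proof (intro allI impI)
    fix i assume "i < n"
    then have "R (c (n - Suc i)) (c (Suc (n - Suc i)))" using c(3) by (simp add: walk_def)
    moreover have "Suc (n - Suc i) = n - i" using \<open>i < n\<close> by arith
    ultimately show "R (c (n - i)) (c (n - Suc i))" using assms(1) by (metis sympD)
  qed
  then show ?thesis using c unfolding W_def by (intro exI[of _ "\<lambda>i. c (n - i)"]) simp
qed

lemma W_sub: assumes "walk R c n" "i \<le> j" "j \<le> n" shows "W R (c i) (c j) (j - i)"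
  unfolding W_def using assms
  by (intro exI[of _ "\<lambda>k. c (i + k)"]) (auto simp: walk_def)

lemma shortest_odd_cycle:
  assumes sym: "symp R" and irr: "\<And>x. \<not> R x x" and odd: "W R u u n" "odd n"
  shows "\<exists>m c. odd m \<and> 3 \<le> m \<and> (\<forall>i<m. \<forall>j<m. i < j \<longrightarrow> c i \<noteq> c j) \<and>
     (\<forall>i<m. \<forall>j<m. i < j \<longrightarrow> (R (c i) (c j) \<longleftrightarrow> j = Suc i \<or> (i = 0 \<and> j = m - 1)))"
proof -
  define P where "P m \<longleftrightarrow> (\<exists>u. W R u u m) \<and> odd m" for m
  have "P n" using odd unfolding P_def by blast
  define m where "m = (LEAST m. P m)"
  have Pm: "P m" unfolding m_def by (rule LeastI[of P n]) fact
  have min: "\<And>k v. k < m \<Longrightarrow> W R v v k \<Longrightarrow> odd k \<Longrightarrow> False"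
    using not_less_Least[of _ P] unfolding m_def P_def by blast
  obtain u' where "W R u' u' m" and om: "odd m" using Pm unfolding P_def by blast
  then obtain c where c0: "c 0 = u'" and cm: "c m = u'" and wc: "walk R c m" unfolding W_def by blast
  have m1: "m \<noteq> 1"
  proof
    assume "m = 1" then have "R (c 0) (c 1)" using wc by (simp add: walk_def)
    then show False using c0 cm irr \<open>m = 1\<close> by simp
  qed
  have m3: "3 \<le> m" using om m1 by presburger
  have dist: "\<forall>i<m. \<forall>j<m. i < j \<longrightarrow> c i \<noteq> c j"
  proof (intro allI impI notI)
    fix i j assume ij: "i < m" "j < m" "i < j" and eq: "c i = c j"
    have w1: "W R (c i) (c i) (j - i)" using W_sub[OF wc, of i j] ij eq by simp
    have "W R (c j) (c m) (m - j)" using W_sub[OF wc, of j m] ij by simp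
    moreover have "W R (c 0) (c i) (i - 0)" using W_sub[OF wc, of 0 i] ij by simp
    ultimately have "W R (c j) (c i) (m - j + i)" using W_trans c0 cm by fastforce
    then have w2: "W R (c i) (c i) (m - j + i)" using eq by simp
    have "odd (j - i) \<or> odd (m - j + i)" using om ij by presburger
    moreover have "j - i < m" "m - j + i < m" using ij by arith+
    ultimately show False using min w1 w2 by blast
  qed
  have chord: "\<forall>i<m. \<forall>j<m. i < j \<longrightarrow> (R (c i) (c j) \<longleftrightarrow> j = Suc i \<or> (i = 0 \<and> j = m - 1))"
  proof (intro allI impI iffI)
    fix i j assume ij: "i < m" "j < m" "i < j" and r: "R (c i) (c j)"
    show "j = Suc i \<or> (i = 0 \<and> j = m - 1)"
    proof (rule ccontr)
      assume nc: "\<not> (j = Suc i \<or> (i = 0 \<and> j = m - 1))"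
      have "W R (c i) (c j) (j - i)" using W_sub[OF wc, of i j] ij by simp
      moreover have "W R (c j) (c i) 1" using W_edge[of R "c j" "c i"] r sym by (simp add: sympD)
      ultimately have w1: "W R (c i) (c i) (j - i + 1)" using W_trans by fastforce
      have "W R (c 0) (c i) (i - 0)" using W_sub[OF wc, of 0 i] ij by simp
      moreover have "W R (c i) (c j) 1" using W_edge r by fastforce
      moreover have "W R (c j) (c m) (m - j)" using W_sub[OF wc, of j m] ij by simp
      ultimately have "W R (c 0) (c m) (i - 0 + 1 + (m - j))" by (meson W_trans)
      then have "W R (c 0) (c m) (i + 1 + (m - j))" by simp
      then have w2: "W R (c 0) (c 0) (i + 1 + (m - j))" using c0 cm by simp
      have l1: "j - i + 1 < m" using nc ij by arith
      have l2: "i + 1 + (m - j) < m" using nc ij by arith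
      have "odd (j - i + 1) \<or> odd (i + 1 + (m - j))" using om ij by presburger
      then show False using min w1 w2 l1 l2 by blast
    qed
  next
    fix i j assume ij: "i < m" "j < m" "i < j" and h: "j = Suc i \<or> (i = 0 \<and> j = m - 1)"
    show "R (c i) (c j)"
    proof (cases "j = Suc i")
      case True then show ?thesis using wc ij by (simp add: walk_def)
    next
      case False
      then have "i = 0" "j = m - 1" using h by auto
      have "Suc j = m" using \<open>j = m - 1\<close> ij by arith
      have "R (c j) (c (Suc j))" using wc ij unfolding walk_def by blast
      then show ?thesis using c0 cm \<open>i = 0\<close> \<open>Suc j = m\<close> sym by (metis sympD)
    qed
  qed
  show ?thesis using om m3 dist chord by blast
qed

context fgr begin

lemma K_pm:
  assumes V: "x \<in> verts H" "p1 \<in> verts H" "p2 \<in> verts H" "p3 \<in> verts H" "y \<in> verts H" "q1 \<in> verts H" "q2 \<in> verts H" "q3 \<in> verts H" and d: "distinct [x,p1,p2,p3,y,q1,q2,q3]"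
    and "fe H x y" and "\<not> fe H x p1" "\<not> fe H x p2" "\<not> fe H x p3" "\<not> fe H p1 p2" "\<not> fe H p1 p3" "\<not> fe H p2 p3" "\<not> fe H y q1" "\<not> fe H y q2" "\<not> fe H y q3" "\<not> fe H q1 q2" "\<not> fe H q1 q3" "\<not> fe H q2 q3" "\<not> fe H x q1" "\<not> fe H x q2" "\<not> fe H x q3" "\<not> fe H y p1" "\<not> fe H y p2" "\<not> fe H y p3"
    and pm: "fe H p1 q1 \<or> fe H p1 q2" "fe H p1 q1 \<or> fe H p2 q1" "fe H p1 q1 \<or> fe H p1 q3" "fe H p1 q1 \<or> fe H p3 q1" "fe H p1 q2 \<or> fe H p1 q3" "fe H p2 q1 \<or> fe H p3 q1" "fe H p2 q1 \<or> fe H p2 q2" "fe H p1 q2 \<or> fe H p2 q2" "fe H p2 q1 \<or> fe H p2 q3" "fe H p1 q2 \<or> fe H p3 q2" "fe H p2 q2 \<or> fe H p2 q3" "fe H p2 q2 \<or> fe H p3 q2" "fe H p3 q1 \<or> fe H p3 q2" "fe H p1 q3 \<or> fe H p2 q3" "fe H p3 q1 \<or> fe H p3 q3" "fe H p1 q3 \<or> fe H p3 q3" "fe H p3 q2 \<or> fe H p3 q3" "fe H p2 q3 \<or> fe H p3 q3"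
  shows False
proof -
  have dd: "x \<noteq> p1" "x \<noteq> p2" "x \<noteq> p3" "x \<noteq> y" "x \<noteq> q1" "x \<noteq> q2" "x \<noteq> q3" "p1 \<noteq> x" "p1 \<noteq> p2" "p1 \<noteq> p3" "p1 \<noteq> y" "p1 \<noteq> q1" "p1 \<noteq> q2" "p1 \<noteq> q3" "p2 \<noteq> x" "p2 \<noteq> p1" "p2 \<noteq> p3" "p2 \<noteq> y" "p2 \<noteq> q1" "p2 \<noteq> q2" "p2 \<noteq> q3" "p3 \<noteq> x" "p3 \<noteq> p1" "p3 \<noteq> p2" "p3 \<noteq> y" "p3 \<noteq> q1" "p3 \<noteq> q2" "p3 \<noteq> q3" "y \<noteq> x" "y \<noteq> p1" "y \<noteq> p2" "y \<noteq> p3" "y \<noteq> q1" "y \<noteq> q2" "y \<noteq> q3" "q1 \<noteq> x" "q1 \<noteq> p1" "q1 \<noteq> p2" "q1 \<noteq> p3" "q1 \<noteq> y" "q1 \<noteq> q2" "q1 \<noteq> q3" "q2 \<noteq> x" "q2 \<noteq> p1" "q2 \<noteq> p2" "q2 \<noteq> p3" "q2 \<noteq> y" "q2 \<noteq> q1" "q2 \<noteq> q3" "q3 \<noteq> x" "q3 \<noteq> p1" "q3 \<noteq> p2" "q3 \<noteq> p3" "q3 \<noteq> y" "q3 \<noteq> q1" "q3 \<noteq> q2" using d by auto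
  note base = V dd assms
  have k0: "fe H p1 q2 \<Longrightarrow> fe H p1 q3 \<Longrightarrow> fe H p2 q1 \<Longrightarrow> fe H p2 q3 \<Longrightarrow> fe H p3 q1 \<Longrightarrow> fe H p3 q2 \<Longrightarrow> False"
    by (rule K_gen[of x p1 p2 p3 y q1 q2 q3]) (use base in \<open>simp_all add: fe_commute\<close>)
  have k1: "fe H p1 q3 \<Longrightarrow> fe H p1 q2 \<Longrightarrow> fe H p2 q1 \<Longrightarrow> fe H p2 q2 \<Longrightarrow> fe H p3 q1 \<Longrightarrow> fe H p3 q3 \<Longrightarrow> False"
    by (rule K_gen[of x p1 p2 p3 y q1 q3 q2]) (use base in \<open>simp_all add: fe_commute\<close>)
  have k2: "fe H p1 q1 \<Longrightarrow> fe H p1 q3 \<Longrightarrow> fe H p2 q2 \<Longrightarrow> fe H p2 q3 \<Longrightarrow> fe H p3 q2 \<Longrightarrow> fe H p3 q1 \<Longrightarrow> False"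
    by (rule K_gen[of x p1 p2 p3 y q2 q1 q3]) (use base in \<open>simp_all add: fe_commute\<close>)
  have k3: "fe H p1 q3 \<Longrightarrow> fe H p1 q1 \<Longrightarrow> fe H p2 q2 \<Longrightarrow> fe H p2 q1 \<Longrightarrow> fe H p3 q2 \<Longrightarrow> fe H p3 q3 \<Longrightarrow> False"
    by (rule K_gen[of x p1 p2 p3 y q2 q3 q1]) (use base in \<open>simp_all add: fe_commute\<close>)
  have k4: "fe H p1 q1 \<Longrightarrow> fe H p1 q2 \<Longrightarrow> fe H p2 q3 \<Longrightarrow> fe H p2 q2 \<Longrightarrow> fe H p3 q3 \<Longrightarrow> fe H p3 q1 \<Longrightarrow> False"
    by (rule K_gen[of x p1 p2 p3 y q3 q1 q2]) (use base in \<open>simp_all add: fe_commute\<close>)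
  have k5: "fe H p1 q2 \<Longrightarrow> fe H p1 q1 \<Longrightarrow> fe H p2 q3 \<Longrightarrow> fe H p2 q1 \<Longrightarrow> fe H p3 q3 \<Longrightarrow> fe H p3 q2 \<Longrightarrow> False"
    by (rule K_gen[of x p1 p2 p3 y q3 q2 q1]) (use base in \<open>simp_all add: fe_commute\<close>)
  show False using pm k0 k1 k2 k3 k4 k5 by (smt (verit))
qed

lemma fe_symp: "symp (fe H)" using fe_commute by (auto intro: sympI)

lemma mod_facts: assumes "i < j" "j < (m::nat)"
  shows "(j = Suc i mod m \<longleftrightarrow> j = Suc i)" "(i = Suc j mod m \<longleftrightarrow> i = 0 \<and> j = m - 1)"
proof -
  have "Suc i < m" using assms by arith
  then show "(j = Suc i mod m \<longleftrightarrow> j = Suc i)" by simp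
  show "(i = Suc j mod m \<longleftrightarrow> i = 0 \<and> j = m - 1)"
  proof (cases "Suc j = m")
    case True then show ?thesis using assms by auto
  next
    case False then have "Suc j < m" using assms by arith
    then show ?thesis using assms by auto
  qed
qed

lemma cycle_emb:
  assumes m3: "3 \<le> m" and V: "\<forall>i<m. c i \<in> verts H"
    and dist: "\<forall>i<m. \<forall>j<m. i < j \<longrightarrow> c i \<noteq> c j"
    and chord: "\<forall>i<m. \<forall>j<m. i < j \<longrightarrow> (fe H (c i) (c j) \<longleftrightarrow> j = Suc i \<or> (i = 0 \<and> j = m - 1))"
  shows "induced_embeds (co_cycle m) H"
proof (rule embed_gen[OF sg, of "map c [0..<m]" m])
  show "distinct (map c [0..<m])" unfolding distinct_map
    using dist by (auto simp: inj_on_def) (metis linorder_neqE_nat)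
  show "set (map c [0..<m]) \<subseteq> verts H" using V by auto
  show "length (map c [0..<m]) = m" by simp
  show "verts (co_cycle m) = {0..<m}" by (simp add: co_cycle_def mk_graph_verts)
  show "\<And>i j. adj (co_cycle m) i j \<Longrightarrow> adj (co_cycle m) j i" by (simp add: co_cycle_def mk_graph_sym)
  show "\<And>i. \<not> adj (co_cycle m) i i" by (simp add: co_cycle_def mk_graph_irr)
  show "\<forall>j<m. \<forall>i<j. adj H (map c [0..<m] ! i) (map c [0..<m] ! j) = adj (co_cycle m) i j"
  proof (intro allI impI)
    fix i j assume j: "j < m" and ij: "i < j"
    have "adj H (c i) (c j) \<longleftrightarrow> \<not> fe H (c i) (c j)"
      using adj_fe V dist j ij by simp
    also have "\<dots> \<longleftrightarrow> \<not> (j = Suc i \<or> (i = 0 \<and> j = m - 1))" using chord j ij by simp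
    also have "\<dots> \<longleftrightarrow> adj (co_cycle m) i j"
      using mod_facts[OF ij j] j ij by (auto simp: co_cycle_def mk_graph_def adj_def)
    finally show "adj H (map c [0..<m] ! i) (map c [0..<m] ! j) = adj (co_cycle m) i j"
      using j ij by simp
  qed
qed

lemma no_odd: assumes "W (fe H) u u n" "odd n" shows False
proof -
  obtain m c where om: "odd m" and m3: "3 \<le> m" and dist: "\<forall>i<m. \<forall>j<m. i < j \<longrightarrow> c i \<noteq> c j"
    and chord: "\<forall>i<m. \<forall>j<m. i < j \<longrightarrow> (fe H (c i) (c j) \<longleftrightarrow> j = Suc i \<or> (i = 0 \<and> j = m - 1))"
    using shortest_odd_cycle[OF fe_symp fe_irr assms] by blast
  have V: "\<forall>i<m. c i \<in> verts H"
  proof (intro allI impI)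
    fix i assume i: "i < m"
    show "c i \<in> verts H"
    proof (cases "Suc i < m")
      case True then have "fe H (c i) (c (Suc i))" using chord by simp
      then show ?thesis by (rule fe_V1)
    next
      case False then have "i = m - 1" using i by arith
      then have "fe H (c 0) (c i)" using chord i m3 by simp
      then show ?thesis by (rule fe_V2)
    qed
  qed
  have emb: "induced_embeds (co_cycle m) H" by (rule cycle_emb[OF m3 V dist chord])
  show False
  proof (cases "m \<le> 7")
    case True
    then have "m = 3 \<or> m = 5 \<or> m = 7" using om m3 by presburger
    then show False using emb fr by (auto simp: Free_def N_graphs_def)
  next
    case False
    then have m9: "9 \<le> m" using om by presburger
    have ch: "\<And>i j. i < m \<Longrightarrow> j < m \<Longrightarrow> i < j \<Longrightarrow> fe H (c i) (c j) \<longleftrightarrow> j = Suc i \<or> (i = 0 \<and> j = m - 1)"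
      using chord by blast
    have ch2: "\<And>i j. i < m \<Longrightarrow> j < m \<Longrightarrow> j < i \<Longrightarrow> fe H (c i) (c j) \<longleftrightarrow> i = Suc j \<or> (j = 0 \<and> i = m - 1)"
      using chord fe_commute by blast
    have dd: "\<And>i j. i < m \<Longrightarrow> j < m \<Longrightarrow> i \<noteq> j \<Longrightarrow> c i \<noteq> c j"
      using dist by (metis linorder_neqE_nat)
    have Vs: "\<And>i. i < m \<Longrightarrow> c i \<in> verts H" using V by blast
    show False
      apply (rule G1_emb[of "c 2" "c 0" "c 3" "c 1" "c 5" "c 7"])
      using m9 by (simp_all add: adj_fe Vs dd ch ch2)
  qed
qed

lemma bip: "\<exists>col::'a \<Rightarrow> bool. \<forall>x y. fe H x y \<longrightarrow> col x \<noteq> col y"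
proof -
  define root where "root v = (SOME r. \<exists>n. W (fe H) v r n)" for v
  define col where "col v = (\<exists>n. W (fe H) (root v) v n \<and> even n)" for v
  have rootW: "\<exists>n. W (fe H) (root v) v n" for v
  proof -
    have "\<exists>n. W (fe H) v (root v) n" unfolding root_def by (rule someI[of _ v]) (rule exI[of _ 0], rule W_0)
    then show ?thesis using W_rev[OF fe_symp] by blast
  qed
  have "\<forall>x y. fe H x y \<longrightarrow> col x \<noteq> col y"
  proof (intro allI impI)
    fix x y assume xy: "fe H x y"
    have yx: "fe H y x" using xy fe_commute by simp
    have "(\<lambda>r. \<exists>n. W (fe H) x r n) = (\<lambda>r. \<exists>n. W (fe H) y r n)"
    proof (intro ext iffI)
      fix r assume "\<exists>n. W (fe H) x r n"
      then show "\<exists>n. W (fe H) y r n" using W_trans[OF W_edge[of "fe H" y x, OF yx]] by blast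
    next
      fix r assume "\<exists>n. W (fe H) y r n"
      then show "\<exists>n. W (fe H) x r n" using W_trans[OF W_edge[of "fe H" x y, OF xy]] by blast
    qed
    then have rr: "root x = root y" unfolding root_def by simp
    define r where "r = root x"
    obtain n1 where n1: "W (fe H) r x n1" using rootW r_def by blast
    obtain n2 where n2: "W (fe H) r y n2" using rootW r_def rr by metis
    have e1: "W (fe H) r y (n1 + 1)" using W_trans[OF n1 W_edge[of "fe H" x y, OF xy]] .
    have e2: "W (fe H) r x (n2 + 1)" using W_trans[OF n2 W_edge[of "fe H" y x, OF yx]] .
    have closed: "W (fe H) r r (k + l)" if "W (fe H) r v k" "W (fe H) r v l" for v k l
      using W_trans[OF that(1) W_rev[OF fe_symp that(2)]] .
    show "col x \<noteq> col y"
    proof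
      assume eq: "col x = col y"
      show False
      proof (cases "col x")
        case True
        then obtain k where k: "W (fe H) r x k" "even k" unfolding col_def r_def by blast
        from True eq obtain l where l: "W (fe H) r y l" "even l" unfolding col_def r_def rr by blast
        have "W (fe H) r y (k + 1)" using W_trans[OF k(1) W_edge[of "fe H" x y, OF xy]] .
        from closed[OF this l(1)] have "W (fe H) r r (k + 1 + l)" .
        moreover have "odd (k + 1 + l)" using k(2) l(2) by simp
        ultimately show False using no_odd by blast
      next
        case False
        then have ox: "odd n1" using n1 unfolding col_def r_def by blast
        from False eq have "odd n2" using n2 unfolding col_def r_def rr by blast
        have "even (n1 + 1)" using ox by simp
        then have "col y" using e1 unfolding col_def r_def rr by blast
        then show False using False eq by simp
      qed
    qed
  qed
  then show ?thesis by blast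
qed

end




definition good_part :: "'a graph \<Rightarrow> 'a set \<Rightarrow> bool" where
  "good_part H A \<longleftrightarrow> A \<subseteq> verts H \<and> (\<forall>x\<in>A. \<forall>y\<in>A. \<not> fe H x y)
    \<and> (\<forall>x\<in>verts H - A. \<forall>y\<in>verts H - A. \<not> fe H x y)
    \<and> (\<forall>b\<in>verts H - A. \<forall>a1\<in>A. \<forall>a2\<in>A. \<forall>a3\<in>A. a1 \<noteq> a2 \<and> a1 \<noteq> a3 \<and> a2 \<noteq> a3
          \<longrightarrow> fe H b a1 \<or> fe H b a2 \<or> fe H b a3)
    \<and> (\<forall>b\<in>verts H - A. \<forall>b'\<in>verts H - A. \<forall>a\<in>A. \<forall>a'\<in>A. b \<noteq> b' \<and> a \<noteq> a'
          \<longrightarrow> fe H b a \<or> fe H b a' \<or> fe H b' a \<or> fe H b' a')"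

lemma card_le2_cases:
  assumes "finite S" "card S \<le> 2"
  shows "S = {} \<or> (\<exists>a. S = {a}) \<or> (\<exists>a b. a \<noteq> b \<and> S = {a, b})"
proof -
  consider "card S = 0" | "card S = 1" | "card S = 2" using assms(2) by arith
  then show ?thesis
  proof cases
    case 1 then show ?thesis using assms(1) by simp
  next
    case 2 then show ?thesis by (metis card_1_singletonE)
  next
    case 3 then show ?thesis unfolding card_2_iff by blast
  qed
qed

lemma three_of_card:
  assumes "finite S" "\<not> card S \<le> 2"
  shows "\<exists>a b c. a \<in> S \<and> b \<in> S \<and> c \<in> S \<and> a \<noteq> b \<and> a \<noteq> c \<and> b \<noteq> c"
proof -
  have "3 \<le> card S" using assms(2) by arith
  then obtain T where T: "T \<subseteq> S" "card T = 3" by (rule obtain_subset_with_card_n)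
  then obtain a b c where "T = {a, b, c}" "a \<noteq> b" "b \<noteq> c" "a \<noteq> c" unfolding card_3_iff by blast
  then show ?thesis using T(1) by blast
qed

lemma construct:
  assumes sg: "simple_graph H" and gp: "good_part H A"
  shows "in_Qstar H"
proof -
  let ?V = "verts H"
  define B where "B = ?V - A"
  have finV: "finite ?V" using sg by (simp add: simple_graph_def)
  have AV: "A \<subseteq> ?V" using gp by (simp add: good_part_def)
  have Aind: "\<And>x y. x \<in> A \<Longrightarrow> y \<in> A \<Longrightarrow> \<not> fe H x y" using gp by (simp add: good_part_def)
  have Bind: "\<And>x y. x \<in> B \<Longrightarrow> y \<in> B \<Longrightarrow> \<not> fe H x y" using gp by (simp add: good_part_def B_def)
  have c3: "\<And>b a1 a2 a3. b \<in> B \<Longrightarrow> a1 \<in> A \<Longrightarrow> a2 \<in> A \<Longrightarrow> a3 \<in> A \<Longrightarrow> a1 \<noteq> a2 \<Longrightarrow> a1 \<noteq> a3 \<Longrightarrow> a2 \<noteq> a3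
      \<Longrightarrow> fe H b a1 \<or> fe H b a2 \<or> fe H b a3" using gp unfolding good_part_def B_def by blast
  have c22: "\<And>b b' a a'. b \<in> B \<Longrightarrow> b' \<in> B \<Longrightarrow> a \<in> A \<Longrightarrow> a' \<in> A \<Longrightarrow> b \<noteq> b' \<Longrightarrow> a \<noteq> a'
      \<Longrightarrow> fe H b a \<or> fe H b a' \<or> fe H b' a \<or> fe H b' a'" using gp unfolding good_part_def B_def by blast
  have sym: "\<And>x y. adj H x y \<Longrightarrow> adj H y x" and irr: "\<And>x. \<not> adj H x x"
    and inV: "\<And>x y. adj H x y \<Longrightarrow> x \<in> ?V \<and> y \<in> ?V"
    using sg unfolding simple_graph_def by auto
  have adjfe: "\<And>x y. x \<in> ?V \<Longrightarrow> y \<in> ?V \<Longrightarrow> x \<noteq> y \<Longrightarrow> adj H x y \<longleftrightarrow> \<not> fe H x y"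
    unfolding fe_def by auto
  obtain g :: "'a \<Rightarrow> nat" and M where gM: "g ` ?V = {i. i < M}" and ginj: "inj_on g ?V"
    using finite_imp_inj_to_nat_seg[OF finV] by blast
  have gless: "\<And>x. x \<in> ?V \<Longrightarrow> g x < M" using gM by blast
  define NA where "NA b = {a \<in> A. adj H b a}" for b
  have finNA: "finite (NA b)" for b using finite_subset[OF _ finV] AV by (auto simp: NA_def)
  have cardNA: "card (NA b) \<le> 2" if "b \<in> B" for b
  proof (rule ccontr)
    assume "\<not> card (NA b) \<le> 2"
    then obtain a1 a2 a3 where "a1 \<in> NA b" "a2 \<in> NA b" "a3 \<in> NA b" "a1 \<noteq> a2" "a1 \<noteq> a3" "a2 \<noteq> a3"
      using three_of_card[OF finNA] by blast
    then show False using c3[OF that, of a1 a2 a3] by (auto simp: NA_def fe_def)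
  qed
  define f1 where "f1 b = M + 2 * g b" for b
  define f2 where "f2 b = M + 2 * g b + 1" for b
  define ep where "ep b = (if card (NA b) = 2 then g ` NA b
       else if card (NA b) = 1 then insert (f1 b) (g ` NA b) else {f1 b, f2 b})" for b
  have fresh: "\<And>b x. x \<in> ?V \<Longrightarrow> g x \<noteq> f1 b \<and> g x \<noteq> f2 b"
  proof -
    fix b x assume "x \<in> ?V" then have "g x < M" by (rule gless)
    then show "g x \<noteq> f1 b \<and> g x \<noteq> f2 b" by (simp add: f1_def f2_def)
  qed
  have NAV: "NA b \<subseteq> ?V" for b using AV by (auto simp: NA_def)
  have ep2: "\<exists>u v. u \<noteq> v \<and> ep b = {u, v}" if bB: "b \<in> B" for b
  proof -
    consider "NA b = {}" | a where "NA b = {a}" | a a' where "a \<noteq> a'" "NA b = {a, a'}"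
      using card_le2_cases[OF finNA cardNA[OF bB]] by blast
    then show ?thesis
    proof cases
      case 1 then have "ep b = {f1 b, f2 b}" by (simp add: ep_def)
      moreover have "f1 b \<noteq> f2 b" by (simp add: f1_def f2_def)
      ultimately show ?thesis by blast
    next
      case (2 a)
      then have "a \<in> ?V" using NAV by blast
      then show ?thesis using 2 fresh[of a b] by (auto simp: ep_def)
    next
      case (3 a a')
      then have "a \<in> ?V" "a' \<in> ?V" using NAV by blast+
      then have "g a \<noteq> g a'" using 3 ginj by (meson inj_on_contraD)
      then show ?thesis using 3 by (auto simp: ep_def)
    qed
  qed
  have ep_g: "x \<in> ?V \<Longrightarrow> b \<in> B \<Longrightarrow> g x \<in> ep b \<longleftrightarrow> x \<in> NA b" for x b
  proof -
    assume xV: "x \<in> ?V" and bB: "b \<in> B"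
    have "card (NA b) = 0 \<or> card (NA b) = 1 \<or> card (NA b) = 2" using cardNA[OF bB] by arith
    then have c012: "NA b = {} \<or> card (NA b) = 1 \<or> card (NA b) = 2" using finNA[of b] by auto
    have "g x \<in> g ` NA b \<longleftrightarrow> x \<in> NA b" using inj_on_image_mem_iff[OF ginj xV NAV] .
    then show ?thesis using fresh[OF xV, of b] c012 by (auto simp: ep_def)
  qed
  have ep_inj: "ep b = ep b' \<Longrightarrow> b \<in> B \<Longrightarrow> b' \<in> B \<Longrightarrow> b = b'" for b b'
  proof (rule ccontr)
    assume eq: "ep b = ep b'" and bB: "b \<in> B" and b'B: "b' \<in> B" and ne: "b \<noteq> b'"
    have bV: "b \<in> ?V" "b' \<in> ?V" using bB b'B B_def by auto
    show False
    proof (cases "card (NA b) = 2")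
      case True
      then have eb: "ep b = g ` NA b" by (simp add: ep_def)
      show False
      proof (cases "card (NA b') = 2")
        case True
        then have "g ` NA b = g ` NA b'" using eq eb by (simp add: ep_def)
        then have NAeq: "NA b = NA b'" using inj_on_image_eq_iff[OF ginj NAV NAV] by blast
        obtain a a' where aa: "a \<noteq> a'" "NA b = {a, a'}" using \<open>card (NA b) = 2\<close> by (auto simp: card_2_iff)
        have "a \<in> A" "a' \<in> A" "adj H b a" "adj H b a'" "adj H b' a" "adj H b' a'"
          using aa NAeq by (auto simp: NA_def)
        then show False using c22[OF bB b'B _ _ ne aa(1)] by (auto simp: fe_def)
      next
        case False
        then have "f1 b' \<in> ep b'" by (auto simp: ep_def)
        then have "f1 b' \<in> g ` NA b" using eq eb by simp
        then obtain z where "z \<in> NA b" "f1 b' = g z" by blast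
        then show False using fresh[of z b'] NAV by auto
      qed
    next
      case False
      then have "f1 b \<in> ep b" by (auto simp: ep_def)
      then have f1in: "f1 b \<in> ep b'" using eq by simp
      have "f1 b \<noteq> g y" if "y \<in> ?V" for y using fresh[OF that, of b] by simp
      then have "f1 b \<notin> g ` NA b'" using NAV by blast
      have "ep b' \<subseteq> g ` NA b' \<union> {f1 b', f2 b'}" by (auto simp: ep_def)
      then have "f1 b = f1 b' \<or> f1 b = f2 b'" using f1in \<open>f1 b \<notin> g ` NA b'\<close> by blast
      moreover have "f1 b \<noteq> f2 b'" unfolding f1_def f2_def by presburger
      ultimately have "f1 b = f1 b'" by blast
      then have "g b = g b'" unfolding f1_def by simp
      then show False using ginj bV ne by (meson inj_on_contraD)
    qed
  qed
  define VG where "VG = g ` A \<union> \<Union> (ep ` B)"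
  define G :: "nat graph" where "G = (VG, \<lambda>u v. u \<noteq> v \<and> (\<exists>b\<in>B. ep b = {u, v}))"
  have finep: "finite (ep b)" for b using finNA by (auto simp: ep_def)
  have finB: "finite B" using finV B_def by simp
  have finA: "finite A" using finite_subset[OF AV finV] .
  have sgG: "simple_graph G"
    unfolding simple_graph_def G_def verts_def adj_def VG_def using finA finB finep by auto
  have epQ: "ep b \<in> Qedges G" if bB: "b \<in> B" for b
  proof -
    obtain u v where "u \<noteq> v" "ep b = {u, v}" using ep2[OF bB] by blast
    then show ?thesis unfolding Qedges_def G_def adj_def using bB by auto
  qed
  have gVG: "g a \<in> verts G" if "a \<in> A" for a using that by (simp add: G_def verts_def VG_def)
  define f where "f x = (if x \<in> A then Inl (g x) else Inr (ep x))" for x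
  have "induced_embeds H (Qgraph G)"
    unfolding induced_embeds_def
  proof (intro exI[of _ f] conjI ballI)
    show "inj_on f ?V"
    proof (rule inj_onI)
      fix x y assume x: "x \<in> ?V" and y: "y \<in> ?V" and fxy: "f x = f y"
      show "x = y"
      proof (cases "x \<in> A")
        case True
        then show ?thesis using fxy x y ginj by (auto simp: f_def split: if_splits dest: inj_onD)
      next
        case False
        then have "y \<notin> A" using fxy by (auto simp: f_def split: if_splits)
        then show ?thesis using False fxy x y ep_inj by (auto simp: f_def B_def)
      qed
    qed
    show "f ` ?V \<subseteq> verts (Qgraph G)"
      using gVG epQ by (auto simp: f_def Qgraph_def verts_def B_def)
    fix x y assume x: "x \<in> ?V" and y: "y \<in> ?V"
    have fxV: "f x \<in> Inl ` verts G \<union> Inr ` Qedges G" and fyV: "f y \<in> Inl ` verts G \<union> Inr ` Qedges G"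
      using x y gVG epQ by (auto simp: f_def B_def)
    show "adj (Qgraph G) (f x) (f y) = adj H x y"
    proof (cases "x \<in> A"; cases "y \<in> A")
      assume xA: "x \<in> A" and yA: "y \<in> A"
      have "f x = f y \<longleftrightarrow> x = y" using xA yA x y ginj by (auto simp: f_def dest: inj_onD)
      moreover have "adj H x y \<longleftrightarrow> x \<noteq> y" using Aind xA yA adjfe x y irr by blast
      ultimately show ?thesis using fxV fyV xA yA by (auto simp: Qgraph_def adj_def f_def)
    next
      assume xA: "x \<notin> A" and yA: "y \<notin> A"
      have "f x = f y \<longleftrightarrow> x = y" using xA yA x y ep_inj by (auto simp: f_def B_def)
      moreover have "adj H x y \<longleftrightarrow> x \<noteq> y" using Bind xA yA adjfe x y irr by (auto simp: B_def)
      ultimately show ?thesis using fxV fyV xA yA by (auto simp: Qgraph_def adj_def f_def)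
    next
      assume xA: "x \<in> A" and yA: "y \<notin> A"
      have "adj (Qgraph G) (f x) (f y) \<longleftrightarrow> g x \<in> ep y" using fxV fyV xA yA by (auto simp: Qgraph_def adj_def f_def)
      also have "\<dots> \<longleftrightarrow> adj H y x" using ep_g[OF x, of y] xA yA y by (simp add: NA_def B_def)
      finally show ?thesis using sym by blast
    next
      assume xA: "x \<notin> A" and yA: "y \<in> A"
      have "adj (Qgraph G) (f x) (f y) \<longleftrightarrow> g y \<in> ep x" using fxV fyV xA yA by (auto simp: Qgraph_def adj_def f_def)
      also have "\<dots> \<longleftrightarrow> adj H x y" using ep_g[OF y, of x] yA xA x by (simp add: NA_def B_def)
      finally show ?thesis .
    qed
  qed
  then show ?thesis unfolding in_Qstar_def using sgG by blast
qed




lemma embeds_trans: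
  assumes "induced_embeds F H" "induced_embeds H K"
  shows "induced_embeds F K"
proof -
  obtain f where f: "inj_on f (verts F)" "f ` verts F \<subseteq> verts H"
    "\<forall>x\<in>verts F. \<forall>y\<in>verts F. adj H (f x) (f y) \<longleftrightarrow> adj F x y"
    using assms(1) unfolding induced_embeds_def by blast
  obtain g where g: "inj_on g (verts H)" "g ` verts H \<subseteq> verts K"
    "\<forall>x\<in>verts H. \<forall>y\<in>verts H. adj K (g x) (g y) \<longleftrightarrow> adj H x y"
    using assms(2) unfolding induced_embeds_def by blast
  show ?thesis unfolding induced_embeds_def
  proof (intro exI[of _ "g \<circ> f"] conjI)
    show "inj_on (g \<circ> f) (verts F)" using f g by (simp add: comp_inj_on inj_on_subset)
    show "(g \<circ> f) ` verts F \<subseteq> verts K" using f(2) g(2) by (auto simp: image_subset_iff)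
    show "\<forall>x\<in>verts F. \<forall>y\<in>verts F. adj K ((g \<circ> f) x) ((g \<circ> f) y) = adj F x y"
    proof (intro ballI)
      fix x y assume x: "x \<in> verts F" and y: "y \<in> verts F"
      have "f x \<in> verts H" "f y \<in> verts H" using f(2) x y by auto
      then have "adj K (g (f x)) (g (f y)) = adj H (f x) (f y)" using g(3) by blast
      also have "\<dots> = adj F x y" using f(3) x y by blast
      finally show "adj K ((g \<circ> f) x) ((g \<circ> f) y) = adj F x y" by simp
    qed
  qed
qed

lemma two_elem: "e = {u, w} \<Longrightarrow> v1 \<in> e \<Longrightarrow> v2 \<in> e \<Longrightarrow> v1 \<noteq> v2 \<Longrightarrow> e = {v1, v2}"
  by auto

definition qp :: "nat graph \<Rightarrow> (nat \<Rightarrow> bool) \<Rightarrow> bool" where "qp X s \<longleftrightarrow> (\<forall>x y. x \<in> verts X \<longrightarrow> y \<in> verts X \<longrightarrow> x \<noteq> y \<longrightarrow> \<not> adj X x y \<longrightarrow> s x \<noteq> s y)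
    \<and> (\<forall>b a1 a2 a3. b \<in> verts X \<longrightarrow> a1 \<in> verts X \<longrightarrow> a2 \<in> verts X \<longrightarrow> a3 \<in> verts X \<longrightarrow>
         a1 \<noteq> a2 \<longrightarrow> a1 \<noteq> a3 \<longrightarrow> a2 \<noteq> a3 \<longrightarrow> adj X b a1 \<longrightarrow> adj X b a2 \<longrightarrow> adj X b a3 \<longrightarrow>
         \<not> (\<not> s b \<and> s a1 \<and> s a2 \<and> s a3))
    \<and> (\<forall>b b' a a'. b \<in> verts X \<longrightarrow> b' \<in> verts X \<longrightarrow> a \<in> verts X \<longrightarrow> a' \<in> verts X \<longrightarrow>
         b \<noteq> b' \<longrightarrow> a \<noteq> a' \<longrightarrow> adj X b a \<longrightarrow> adj X b a' \<longrightarrow> adj X b' a \<longrightarrow> adj X b' a' \<longrightarrow>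
         \<not> (\<not> s b \<and> \<not> s b' \<and> s a \<and> s a'))"

lemma Qpart:
  assumes sgG: "simple_graph G" and emb: "induced_embeds X (Qgraph G)"
  shows "\<exists>s. qp X s"
proof -
  obtain f where inj: "inj_on f (verts X)" and im: "f ` verts X \<subseteq> verts (Qgraph G)"
    and ad: "\<forall>x\<in>verts X. \<forall>y\<in>verts X. adj (Qgraph G) (f x) (f y) \<longleftrightarrow> adj X x y"
    using emb unfolding induced_embeds_def by blast
  let ?QV = "Inl ` verts G \<union> Inr ` Qedges G"
  have QV: "verts (Qgraph G) = ?QV" by (simp add: Qgraph_def verts_def)
  have Qadj: "adj (Qgraph G) a b \<longleftrightarrow> a \<noteq> b \<and> a \<in> ?QV \<and> b \<in> ?QV \<and> (case (a, b) of
                (Inl _, Inl _) \<Rightarrow> True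
              | (Inr _, Inr _) \<Rightarrow> True
              | (Inl v, Inr e) \<Rightarrow> v \<in> e
              | (Inr e, Inl v) \<Rightarrow> v \<in> e)" for a b
    by (simp add: Qgraph_def adj_def)
  define s where "s x = isl (f x)" for x
  have fV: "x \<in> verts X \<Longrightarrow> f x \<in> ?QV" for x using im QV by auto
  have P1: "\<forall>x y. x \<in> verts X \<longrightarrow> y \<in> verts X \<longrightarrow> x \<noteq> y \<longrightarrow> \<not> adj X x y \<longrightarrow> s x \<noteq> s y"
  proof (intro allI impI)
    fix x y assume x: "x \<in> verts X" and y: "y \<in> verts X" and ne: "x \<noteq> y" and na: "\<not> adj X x y"
    have "f x \<noteq> f y" using inj x y ne by (auto dest: inj_onD)
    moreover have "\<not> adj (Qgraph G) (f x) (f y)" using na ad x y by blast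
    ultimately show "s x \<noteq> s y" using fV[OF x] fV[OF y] unfolding s_def Qadj
      by (cases "f x"; cases "f y") auto
  qed
  have Inr_of: "x \<in> verts X \<Longrightarrow> \<not> s x \<Longrightarrow> \<exists>e. f x = Inr e \<and> e \<in> Qedges G" for x
    using fV[of x] by (cases "f x") (auto simp: s_def)
  have Inl_of: "x \<in> verts X \<Longrightarrow> s x \<Longrightarrow> \<exists>v. f x = Inl v" for x
    by (cases "f x") (auto simp: s_def)
  have edge2: "e \<in> Qedges G \<Longrightarrow> \<exists>u w. e = {u, w}" for e by (auto simp: Qedges_def)
  have P2: "\<forall>b a1 a2 a3. b \<in> verts X \<longrightarrow> a1 \<in> verts X \<longrightarrow> a2 \<in> verts X \<longrightarrow> a3 \<in> verts X \<longrightarrow>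
         a1 \<noteq> a2 \<longrightarrow> a1 \<noteq> a3 \<longrightarrow> a2 \<noteq> a3 \<longrightarrow> adj X b a1 \<longrightarrow> adj X b a2 \<longrightarrow> adj X b a3 \<longrightarrow>
         \<not> (\<not> s b \<and> s a1 \<and> s a2 \<and> s a3)"
  proof (intro allI impI notI)
    fix b a1 a2 a3 assume V: "b \<in> verts X" "a1 \<in> verts X" "a2 \<in> verts X" "a3 \<in> verts X"
      and ne: "a1 \<noteq> a2" "a1 \<noteq> a3" "a2 \<noteq> a3" and a: "adj X b a1" "adj X b a2" "adj X b a3"
      and ss: "\<not> s b \<and> s a1 \<and> s a2 \<and> s a3"
    obtain e where e: "f b = Inr e" "e \<in> Qedges G" using Inr_of V ss by blast
    obtain v1 where v1: "f a1 = Inl v1" using Inl_of V ss by blast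
    obtain v2 where v2: "f a2 = Inl v2" using Inl_of V ss by blast
    obtain v3 where v3: "f a3 = Inl v3" using Inl_of V ss by blast
    have "adj (Qgraph G) (f b) (f a1)" "adj (Qgraph G) (f b) (f a2)" "adj (Qgraph G) (f b) (f a3)"
      using ad V a by blast+
    then have "v1 \<in> e" "v2 \<in> e" "v3 \<in> e" using e v1 v2 v3 unfolding Qadj by auto
    moreover have "f a1 \<noteq> f a2" "f a1 \<noteq> f a3" "f a2 \<noteq> f a3" using inj V ne by (meson inj_onD)+
    then have "v1 \<noteq> v2" "v1 \<noteq> v3" "v2 \<noteq> v3" using v1 v2 v3 by auto
    moreover obtain u w where "e = {u, w}" using edge2 e by blast
    ultimately show False by auto
  qed
  have P3: "\<forall>b b' a a'. b \<in> verts X \<longrightarrow> b' \<in> verts X \<longrightarrow> a \<in> verts X \<longrightarrow> a' \<in> verts X \<longrightarrow>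
         b \<noteq> b' \<longrightarrow> a \<noteq> a' \<longrightarrow> adj X b a \<longrightarrow> adj X b a' \<longrightarrow> adj X b' a \<longrightarrow> adj X b' a' \<longrightarrow>
         \<not> (\<not> s b \<and> \<not> s b' \<and> s a \<and> s a')"
  proof (intro allI impI notI)
    fix b b' a a' assume V: "b \<in> verts X" "b' \<in> verts X" "a \<in> verts X" "a' \<in> verts X"
      and ne: "b \<noteq> b'" "a \<noteq> a'" and aa: "adj X b a" "adj X b a'" "adj X b' a" "adj X b' a'"
      and ss: "\<not> s b \<and> \<not> s b' \<and> s a \<and> s a'"
    obtain e where e: "f b = Inr e" "e \<in> Qedges G" using Inr_of V ss by blast
    obtain e' where e': "f b' = Inr e'" "e' \<in> Qedges G" using Inr_of V ss by blast
    obtain v where v: "f a = Inl v" using Inl_of V ss by blast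
    obtain v' where v': "f a' = Inl v'" using Inl_of V ss by blast
    have "adj (Qgraph G) (f b) (f a)" "adj (Qgraph G) (f b) (f a')" "adj (Qgraph G) (f b') (f a)" "adj (Qgraph G) (f b') (f a')"
      using ad V aa by blast+
    then have "v \<in> e" "v' \<in> e" "v \<in> e'" "v' \<in> e'" using e e' v v' unfolding Qadj by auto
    moreover have "f a \<noteq> f a'" "f b \<noteq> f b'" using inj V ne by (meson inj_onD)+
    then have "v \<noteq> v'" "e \<noteq> e'" using v v' e e' by auto
    moreover obtain u w where "e = {u, w}" using edge2 e by blast
    moreover obtain u' w' where "e' = {u', w'}" using edge2 e' by blast
    ultimately show False using two_elem by metis
  qed
  show ?thesis using P1 P2 P3 unfolding qp_def by blast
qed

lemma notQ_cc3: assumes "simple_graph G" shows "\<not> induced_embeds (co_cycle 3) (Qgraph G)"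
proof
  assume "induced_embeds (co_cycle 3) (Qgraph G)"
  then obtain s where q: "qp (co_cycle 3) s" using Qpart[OF assms] by blast
  note P = q[unfolded qp_def]
  note P1 = P[THEN conjunct1] and P2 = P[THEN conjunct2, THEN conjunct1] and P3 = P[THEN conjunct2, THEN conjunct2]
  have c0: "s 0 \<noteq> s 1" using P1[rule_format, of 0 1] by (simp add: co_cycle_def mk_graph_def adj_def verts_def)
  have c1: "s 0 \<noteq> s 2" using P1[rule_format, of 0 2] by (simp add: co_cycle_def mk_graph_def adj_def verts_def)
  have c2: "s 1 \<noteq> s 2" using P1[rule_format, of 1 2] by (simp add: co_cycle_def mk_graph_def adj_def verts_def)
  show False using c0 c1 c2 by argo
qed

lemma notQ_cc5: assumes "simple_graph G" shows "\<not> induced_embeds (co_cycle 5) (Qgraph G)"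
proof
  assume "induced_embeds (co_cycle 5) (Qgraph G)"
  then obtain s where q: "qp (co_cycle 5) s" using Qpart[OF assms] by blast
  note P = q[unfolded qp_def]
  note P1 = P[THEN conjunct1] and P2 = P[THEN conjunct2, THEN conjunct1] and P3 = P[THEN conjunct2, THEN conjunct2]
  have c0: "s 0 \<noteq> s 1" using P1[rule_format, of 0 1] by (simp add: co_cycle_def mk_graph_def adj_def verts_def)
  have c1: "s 0 \<noteq> s 4" using P1[rule_format, of 0 4] by (simp add: co_cycle_def mk_graph_def adj_def verts_def)
  have c2: "s 1 \<noteq> s 2" using P1[rule_format, of 1 2] by (simp add: co_cycle_def mk_graph_def adj_def verts_def)
  have c3: "s 2 \<noteq> s 3" using P1[rule_format, of 2 3] by (simp add: co_cycle_def mk_graph_def adj_def verts_def)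
  have c4: "s 3 \<noteq> s 4" using P1[rule_format, of 3 4] by (simp add: co_cycle_def mk_graph_def adj_def verts_def)
  show False using c0 c1 c2 c3 c4 by argo
qed

lemma notQ_cc7: assumes "simple_graph G" shows "\<not> induced_embeds (co_cycle 7) (Qgraph G)"
proof
  assume "induced_embeds (co_cycle 7) (Qgraph G)"
  then obtain s where q: "qp (co_cycle 7) s" using Qpart[OF assms] by blast
  note P = q[unfolded qp_def]
  note P1 = P[THEN conjunct1] and P2 = P[THEN conjunct2, THEN conjunct1] and P3 = P[THEN conjunct2, THEN conjunct2]
  have c0: "s 0 \<noteq> s 1" using P1[rule_format, of 0 1] by (simp add: co_cycle_def mk_graph_def adj_def verts_def)
  have c1: "s 0 \<noteq> s 6" using P1[rule_format, of 0 6] by (simp add: co_cycle_def mk_graph_def adj_def verts_def)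
  have c2: "s 1 \<noteq> s 2" using P1[rule_format, of 1 2] by (simp add: co_cycle_def mk_graph_def adj_def verts_def)
  have c3: "s 2 \<noteq> s 3" using P1[rule_format, of 2 3] by (simp add: co_cycle_def mk_graph_def adj_def verts_def)
  have c4: "s 3 \<noteq> s 4" using P1[rule_format, of 3 4] by (simp add: co_cycle_def mk_graph_def adj_def verts_def)
  have c5: "s 4 \<noteq> s 5" using P1[rule_format, of 4 5] by (simp add: co_cycle_def mk_graph_def adj_def verts_def)
  have c6: "s 5 \<noteq> s 6" using P1[rule_format, of 5 6] by (simp add: co_cycle_def mk_graph_def adj_def verts_def)
  show False using c0 c1 c2 c3 c4 c5 c6 by argo
qed

lemma notQ_G1: assumes "simple_graph G" shows "\<not> induced_embeds (G1) (Qgraph G)"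
proof
  assume "induced_embeds (G1) (Qgraph G)"
  then obtain s where q: "qp (G1) s" using Qpart[OF assms] by blast
  note P = q[unfolded qp_def]
  note P1 = P[THEN conjunct1] and P2 = P[THEN conjunct2, THEN conjunct1] and P3 = P[THEN conjunct2, THEN conjunct2]
  have c0: "s 0 \<noteq> s 2" using P1[rule_format, of 0 2] by (simp add: G1_def join_K2_def mk_graph_def adj_def verts_def)
  have c1: "s 0 \<noteq> s 3" using P1[rule_format, of 0 3] by (simp add: G1_def join_K2_def mk_graph_def adj_def verts_def)
  have c2: "s 1 \<noteq> s 3" using P1[rule_format, of 1 3] by (simp add: G1_def join_K2_def mk_graph_def adj_def verts_def)
  have c3: "\<not> (\<not> s 1 \<and> s 2 \<and> s 4 \<and> s 5)" using P2[rule_format, of 1 2 4 5] by (simp add: G1_def join_K2_def mk_graph_def adj_def verts_def)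
  have c4: "\<not> (\<not> s 2 \<and> s 1 \<and> s 4 \<and> s 5)" using P2[rule_format, of 2 1 4 5] by (simp add: G1_def join_K2_def mk_graph_def adj_def verts_def)
  have c5: "\<not> (\<not> s 4 \<and> s 0 \<and> s 1 \<and> s 5)" using P2[rule_format, of 4 0 1 5] by (simp add: G1_def join_K2_def mk_graph_def adj_def verts_def)
  have c6: "\<not> (\<not> s 4 \<and> s 2 \<and> s 3 \<and> s 5)" using P2[rule_format, of 4 2 3 5] by (simp add: G1_def join_K2_def mk_graph_def adj_def verts_def)
  have c7: "\<not> (\<not> s 5 \<and> s 0 \<and> s 1 \<and> s 4)" using P2[rule_format, of 5 0 1 4] by (simp add: G1_def join_K2_def mk_graph_def adj_def verts_def)
  have c8: "\<not> (\<not> s 5 \<and> s 2 \<and> s 3 \<and> s 4)" using P2[rule_format, of 5 2 3 4] by (simp add: G1_def join_K2_def mk_graph_def adj_def verts_def)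
  have c9: "\<not> (\<not> s 4 \<and> \<not> s 5 \<and> s 0 \<and> s 1)" using P3[rule_format, of 4 5 0 1] by (simp add: G1_def join_K2_def mk_graph_def adj_def verts_def)
  have c10: "\<not> (\<not> s 4 \<and> \<not> s 5 \<and> s 2 \<and> s 3)" using P3[rule_format, of 4 5 2 3] by (simp add: G1_def join_K2_def mk_graph_def adj_def verts_def)
  show False using c0 c1 c2 c3 c4 c5 c6 c7 c8 c9 c10 by argo
qed

lemma notQ_G2: assumes "simple_graph G" shows "\<not> induced_embeds (G2) (Qgraph G)"
proof
  assume "induced_embeds (G2) (Qgraph G)"
  then obtain s where q: "qp (G2) s" using Qpart[OF assms] by blast
  note P = q[unfolded qp_def]
  note P1 = P[THEN conjunct1] and P2 = P[THEN conjunct2, THEN conjunct1] and P3 = P[THEN conjunct2, THEN conjunct2]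
  have c0: "s 0 \<noteq> s 2" using P1[rule_format, of 0 2] by (simp add: G2_def join_K2_def mk_graph_def adj_def verts_def)
  have c1: "s 1 \<noteq> s 3" using P1[rule_format, of 1 3] by (simp add: G2_def join_K2_def mk_graph_def adj_def verts_def)
  have c2: "\<not> (\<not> s 0 \<and> s 1 \<and> s 4 \<and> s 5)" using P2[rule_format, of 0 1 4 5] by (simp add: G2_def join_K2_def mk_graph_def adj_def verts_def)
  have c3: "\<not> (\<not> s 0 \<and> s 3 \<and> s 4 \<and> s 5)" using P2[rule_format, of 0 3 4 5] by (simp add: G2_def join_K2_def mk_graph_def adj_def verts_def)
  have c4: "\<not> (\<not> s 1 \<and> s 0 \<and> s 4 \<and> s 5)" using P2[rule_format, of 1 0 4 5] by (simp add: G2_def join_K2_def mk_graph_def adj_def verts_def)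
  have c5: "\<not> (\<not> s 2 \<and> s 1 \<and> s 4 \<and> s 5)" using P2[rule_format, of 2 1 4 5] by (simp add: G2_def join_K2_def mk_graph_def adj_def verts_def)
  have c6: "\<not> (\<not> s 4 \<and> s 0 \<and> s 1 \<and> s 5)" using P2[rule_format, of 4 0 1 5] by (simp add: G2_def join_K2_def mk_graph_def adj_def verts_def)
  have c7: "\<not> (\<not> s 4 \<and> s 0 \<and> s 3 \<and> s 5)" using P2[rule_format, of 4 0 3 5] by (simp add: G2_def join_K2_def mk_graph_def adj_def verts_def)
  have c8: "\<not> (\<not> s 4 \<and> s 1 \<and> s 2 \<and> s 5)" using P2[rule_format, of 4 1 2 5] by (simp add: G2_def join_K2_def mk_graph_def adj_def verts_def)
  have c9: "\<not> (\<not> s 4 \<and> s 2 \<and> s 3 \<and> s 5)" using P2[rule_format, of 4 2 3 5] by (simp add: G2_def join_K2_def mk_graph_def adj_def verts_def)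
  have c10: "\<not> (\<not> s 5 \<and> s 0 \<and> s 1 \<and> s 4)" using P2[rule_format, of 5 0 1 4] by (simp add: G2_def join_K2_def mk_graph_def adj_def verts_def)
  have c11: "\<not> (\<not> s 5 \<and> s 0 \<and> s 3 \<and> s 4)" using P2[rule_format, of 5 0 3 4] by (simp add: G2_def join_K2_def mk_graph_def adj_def verts_def)
  have c12: "\<not> (\<not> s 5 \<and> s 1 \<and> s 2 \<and> s 4)" using P2[rule_format, of 5 1 2 4] by (simp add: G2_def join_K2_def mk_graph_def adj_def verts_def)
  have c13: "\<not> (\<not> s 5 \<and> s 2 \<and> s 3 \<and> s 4)" using P2[rule_format, of 5 2 3 4] by (simp add: G2_def join_K2_def mk_graph_def adj_def verts_def)
  have c14: "\<not> (\<not> s 4 \<and> \<not> s 5 \<and> s 0 \<and> s 1)" using P3[rule_format, of 4 5 0 1] by (simp add: G2_def join_K2_def mk_graph_def adj_def verts_def)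
  have c15: "\<not> (\<not> s 4 \<and> \<not> s 5 \<and> s 0 \<and> s 3)" using P3[rule_format, of 4 5 0 3] by (simp add: G2_def join_K2_def mk_graph_def adj_def verts_def)
  have c16: "\<not> (\<not> s 4 \<and> \<not> s 5 \<and> s 1 \<and> s 2)" using P3[rule_format, of 4 5 1 2] by (simp add: G2_def join_K2_def mk_graph_def adj_def verts_def)
  have c17: "\<not> (\<not> s 4 \<and> \<not> s 5 \<and> s 2 \<and> s 3)" using P3[rule_format, of 4 5 2 3] by (simp add: G2_def join_K2_def mk_graph_def adj_def verts_def)
  show False using c0 c1 c2 c3 c4 c5 c6 c7 c8 c9 c10 c11 c12 c13 c14 c15 c16 c17 by argo
qed

lemma notQ_G3: assumes "simple_graph G" shows "\<not> induced_embeds (G3) (Qgraph G)"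
proof
  assume "induced_embeds (G3) (Qgraph G)"
  then obtain s where q: "qp (G3) s" using Qpart[OF assms] by blast
  note P = q[unfolded qp_def]
  note P1 = P[THEN conjunct1] and P2 = P[THEN conjunct2, THEN conjunct1] and P3 = P[THEN conjunct2, THEN conjunct2]
  have c0: "s 0 \<noteq> s 2" using P1[rule_format, of 0 2] by (simp add: G3_def join_K2_def mk_graph_def adj_def verts_def)
  have c1: "s 0 \<noteq> s 3" using P1[rule_format, of 0 3] by (simp add: G3_def join_K2_def mk_graph_def adj_def verts_def)
  have c2: "s 1 \<noteq> s 2" using P1[rule_format, of 1 2] by (simp add: G3_def join_K2_def mk_graph_def adj_def verts_def)
  have c3: "\<not> (\<not> s 4 \<and> s 0 \<and> s 1 \<and> s 5)" using P2[rule_format, of 4 0 1 5] by (simp add: G3_def join_K2_def mk_graph_def adj_def verts_def)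
  have c4: "\<not> (\<not> s 4 \<and> s 2 \<and> s 3 \<and> s 5)" using P2[rule_format, of 4 2 3 5] by (simp add: G3_def join_K2_def mk_graph_def adj_def verts_def)
  have c5: "\<not> (\<not> s 5 \<and> s 0 \<and> s 1 \<and> s 4)" using P2[rule_format, of 5 0 1 4] by (simp add: G3_def join_K2_def mk_graph_def adj_def verts_def)
  have c6: "\<not> (\<not> s 5 \<and> s 2 \<and> s 3 \<and> s 4)" using P2[rule_format, of 5 2 3 4] by (simp add: G3_def join_K2_def mk_graph_def adj_def verts_def)
  have c7: "\<not> (\<not> s 0 \<and> \<not> s 1 \<and> s 4 \<and> s 5)" using P3[rule_format, of 0 1 4 5] by (simp add: G3_def join_K2_def mk_graph_def adj_def verts_def)
  have c8: "\<not> (\<not> s 2 \<and> \<not> s 3 \<and> s 4 \<and> s 5)" using P3[rule_format, of 2 3 4 5] by (simp add: G3_def join_K2_def mk_graph_def adj_def verts_def)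
  have c9: "\<not> (\<not> s 4 \<and> \<not> s 5 \<and> s 0 \<and> s 1)" using P3[rule_format, of 4 5 0 1] by (simp add: G3_def join_K2_def mk_graph_def adj_def verts_def)
  have c10: "\<not> (\<not> s 4 \<and> \<not> s 5 \<and> s 2 \<and> s 3)" using P3[rule_format, of 4 5 2 3] by (simp add: G3_def join_K2_def mk_graph_def adj_def verts_def)
  show False using c0 c1 c2 c3 c4 c5 c6 c7 c8 c9 c10 by argo
qed

lemma notQ_G4: assumes "simple_graph G" shows "\<not> induced_embeds (G4) (Qgraph G)"
proof
  assume "induced_embeds (G4) (Qgraph G)"
  then obtain s where q: "qp (G4) s" using Qpart[OF assms] by blast
  note P = q[unfolded qp_def]
  note P1 = P[THEN conjunct1] and P2 = P[THEN conjunct2, THEN conjunct1] and P3 = P[THEN conjunct2, THEN conjunct2]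
  have c0: "s 0 \<noteq> s 4" using P1[rule_format, of 0 4] by (simp add: G4_def mk_graph_def adj_def verts_def)
  have c1: "s 1 \<noteq> s 5" using P1[rule_format, of 1 5] by (simp add: G4_def mk_graph_def adj_def verts_def)
  have c2: "s 2 \<noteq> s 5" using P1[rule_format, of 2 5] by (simp add: G4_def mk_graph_def adj_def verts_def)
  have c3: "s 3 \<noteq> s 4" using P1[rule_format, of 3 4] by (simp add: G4_def mk_graph_def adj_def verts_def)
  have c4: "s 4 \<noteq> s 5" using P1[rule_format, of 4 5] by (simp add: G4_def mk_graph_def adj_def verts_def)
  have c5: "\<not> (\<not> s 0 \<and> \<not> s 3 \<and> s 1 \<and> s 2)" using P3[rule_format, of 0 3 1 2] by (simp add: G4_def mk_graph_def adj_def verts_def)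
  have c6: "\<not> (\<not> s 1 \<and> \<not> s 2 \<and> s 0 \<and> s 3)" using P3[rule_format, of 1 2 0 3] by (simp add: G4_def mk_graph_def adj_def verts_def)
  show False using c0 c1 c2 c3 c4 c5 c6 by argo
qed

lemma notQ_G5k0: assumes "simple_graph G" shows "\<not> induced_embeds (G5k 0) (Qgraph G)"
proof
  assume "induced_embeds (G5k 0) (Qgraph G)"
  then obtain s where q: "qp (G5k 0) s" using Qpart[OF assms] by blast
  note P = q[unfolded qp_def]
  note P1 = P[THEN conjunct1] and P2 = P[THEN conjunct2, THEN conjunct1] and P3 = P[THEN conjunct2, THEN conjunct2]
  have c0: "s 0 \<noteq> s 4" using P1[rule_format, of 0 4] by (simp add: G5k_def mk_graph_def adj_def verts_def)
  have c1: "s 1 \<noteq> s 5" using P1[rule_format, of 1 5] by (simp add: G5k_def mk_graph_def adj_def verts_def)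
  have c2: "s 1 \<noteq> s 6" using P1[rule_format, of 1 6] by (simp add: G5k_def mk_graph_def adj_def verts_def)
  have c3: "s 1 \<noteq> s 7" using P1[rule_format, of 1 7] by (simp add: G5k_def mk_graph_def adj_def verts_def)
  have c4: "s 2 \<noteq> s 5" using P1[rule_format, of 2 5] by (simp add: G5k_def mk_graph_def adj_def verts_def)
  have c5: "s 3 \<noteq> s 5" using P1[rule_format, of 3 5] by (simp add: G5k_def mk_graph_def adj_def verts_def)
  have c6: "\<not> (\<not> s 0 \<and> s 1 \<and> s 2 \<and> s 3)" using P2[rule_format, of 0 1 2 3] by (simp add: G5k_def mk_graph_def adj_def verts_def)
  have c7: "\<not> (\<not> s 0 \<and> s 5 \<and> s 6 \<and> s 7)" using P2[rule_format, of 0 5 6 7] by (simp add: G5k_def mk_graph_def adj_def verts_def)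
  have c8: "\<not> (\<not> s 4 \<and> s 1 \<and> s 2 \<and> s 3)" using P2[rule_format, of 4 1 2 3] by (simp add: G5k_def mk_graph_def adj_def verts_def)
  have c9: "\<not> (\<not> s 4 \<and> s 5 \<and> s 6 \<and> s 7)" using P2[rule_format, of 4 5 6 7] by (simp add: G5k_def mk_graph_def adj_def verts_def)
  show False using c0 c1 c2 c3 c4 c5 c6 c7 c8 c9 by argo
qed

lemma notQ_G5k1: assumes "simple_graph G" shows "\<not> induced_embeds (G5k 1) (Qgraph G)"
proof
  assume "induced_embeds (G5k 1) (Qgraph G)"
  then obtain s where q: "qp (G5k 1) s" using Qpart[OF assms] by blast
  note P = q[unfolded qp_def]
  note P1 = P[THEN conjunct1] and P2 = P[THEN conjunct2, THEN conjunct1] and P3 = P[THEN conjunct2, THEN conjunct2]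
  have c0: "s 0 \<noteq> s 4" using P1[rule_format, of 0 4] by (simp add: G5k_def mk_graph_def adj_def verts_def)
  have c1: "s 1 \<noteq> s 6" using P1[rule_format, of 1 6] by (simp add: G5k_def mk_graph_def adj_def verts_def)
  have c2: "s 1 \<noteq> s 7" using P1[rule_format, of 1 7] by (simp add: G5k_def mk_graph_def adj_def verts_def)
  have c3: "s 2 \<noteq> s 5" using P1[rule_format, of 2 5] by (simp add: G5k_def mk_graph_def adj_def verts_def)
  have c4: "s 2 \<noteq> s 6" using P1[rule_format, of 2 6] by (simp add: G5k_def mk_graph_def adj_def verts_def)
  have c5: "s 3 \<noteq> s 5" using P1[rule_format, of 3 5] by (simp add: G5k_def mk_graph_def adj_def verts_def)
  have c6: "\<not> (\<not> s 0 \<and> s 1 \<and> s 2 \<and> s 3)" using P2[rule_format, of 0 1 2 3] by (simp add: G5k_def mk_graph_def adj_def verts_def)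
  have c7: "\<not> (\<not> s 0 \<and> s 5 \<and> s 6 \<and> s 7)" using P2[rule_format, of 0 5 6 7] by (simp add: G5k_def mk_graph_def adj_def verts_def)
  have c8: "\<not> (\<not> s 4 \<and> s 1 \<and> s 2 \<and> s 3)" using P2[rule_format, of 4 1 2 3] by (simp add: G5k_def mk_graph_def adj_def verts_def)
  have c9: "\<not> (\<not> s 4 \<and> s 5 \<and> s 6 \<and> s 7)" using P2[rule_format, of 4 5 6 7] by (simp add: G5k_def mk_graph_def adj_def verts_def)
  show False using c0 c1 c2 c3 c4 c5 c6 c7 c8 c9 by argo
qed

lemma notQ_G5k2: assumes "simple_graph G" shows "\<not> induced_embeds (G5k 2) (Qgraph G)"
proof
  assume "induced_embeds (G5k 2) (Qgraph G)"
  then obtain s where q: "qp (G5k 2) s" using Qpart[OF assms] by blast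
  note P = q[unfolded qp_def]
  note P1 = P[THEN conjunct1] and P2 = P[THEN conjunct2, THEN conjunct1] and P3 = P[THEN conjunct2, THEN conjunct2]
  have c0: "s 0 \<noteq> s 4" using P1[rule_format, of 0 4] by (simp add: G5k_def mk_graph_def adj_def verts_def)
  have c1: "s 1 \<noteq> s 6" using P1[rule_format, of 1 6] by (simp add: G5k_def mk_graph_def adj_def verts_def)
  have c2: "s 1 \<noteq> s 7" using P1[rule_format, of 1 7] by (simp add: G5k_def mk_graph_def adj_def verts_def)
  have c3: "s 2 \<noteq> s 5" using P1[rule_format, of 2 5] by (simp add: G5k_def mk_graph_def adj_def verts_def)
  have c4: "s 2 \<noteq> s 7" using P1[rule_format, of 2 7] by (simp add: G5k_def mk_graph_def adj_def verts_def)
  have c5: "s 3 \<noteq> s 5" using P1[rule_format, of 3 5] by (simp add: G5k_def mk_graph_def adj_def verts_def)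
  have c6: "\<not> (\<not> s 0 \<and> s 1 \<and> s 2 \<and> s 3)" using P2[rule_format, of 0 1 2 3] by (simp add: G5k_def mk_graph_def adj_def verts_def)
  have c7: "\<not> (\<not> s 0 \<and> s 5 \<and> s 6 \<and> s 7)" using P2[rule_format, of 0 5 6 7] by (simp add: G5k_def mk_graph_def adj_def verts_def)
  have c8: "\<not> (\<not> s 4 \<and> s 1 \<and> s 2 \<and> s 3)" using P2[rule_format, of 4 1 2 3] by (simp add: G5k_def mk_graph_def adj_def verts_def)
  have c9: "\<not> (\<not> s 4 \<and> s 5 \<and> s 6 \<and> s 7)" using P2[rule_format, of 4 5 6 7] by (simp add: G5k_def mk_graph_def adj_def verts_def)
  show False using c0 c1 c2 c3 c4 c5 c6 c7 c8 c9 by argo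
qed

lemma notQ_G5k3: assumes "simple_graph G" shows "\<not> induced_embeds (G5k 3) (Qgraph G)"
proof
  assume "induced_embeds (G5k 3) (Qgraph G)"
  then obtain s where q: "qp (G5k 3) s" using Qpart[OF assms] by blast
  note P = q[unfolded qp_def]
  note P1 = P[THEN conjunct1] and P2 = P[THEN conjunct2, THEN conjunct1] and P3 = P[THEN conjunct2, THEN conjunct2]
  have c0: "s 0 \<noteq> s 4" using P1[rule_format, of 0 4] by (simp add: G5k_def mk_graph_def adj_def verts_def)
  have c1: "s 1 \<noteq> s 6" using P1[rule_format, of 1 6] by (simp add: G5k_def mk_graph_def adj_def verts_def)
  have c2: "s 1 \<noteq> s 7" using P1[rule_format, of 1 7] by (simp add: G5k_def mk_graph_def adj_def verts_def)
  have c3: "s 2 \<noteq> s 5" using P1[rule_format, of 2 5] by (simp add: G5k_def mk_graph_def adj_def verts_def)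
  have c4: "s 2 \<noteq> s 7" using P1[rule_format, of 2 7] by (simp add: G5k_def mk_graph_def adj_def verts_def)
  have c5: "s 3 \<noteq> s 5" using P1[rule_format, of 3 5] by (simp add: G5k_def mk_graph_def adj_def verts_def)
  have c6: "\<not> (\<not> s 0 \<and> s 1 \<and> s 2 \<and> s 3)" using P2[rule_format, of 0 1 2 3] by (simp add: G5k_def mk_graph_def adj_def verts_def)
  have c7: "\<not> (\<not> s 0 \<and> s 5 \<and> s 6 \<and> s 7)" using P2[rule_format, of 0 5 6 7] by (simp add: G5k_def mk_graph_def adj_def verts_def)
  have c8: "\<not> (\<not> s 4 \<and> s 1 \<and> s 2 \<and> s 3)" using P2[rule_format, of 4 1 2 3] by (simp add: G5k_def mk_graph_def adj_def verts_def)
  have c9: "\<not> (\<not> s 4 \<and> s 5 \<and> s 6 \<and> s 7)" using P2[rule_format, of 4 5 6 7] by (simp add: G5k_def mk_graph_def adj_def verts_def)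
  show False using c0 c1 c2 c3 c4 c5 c6 c7 c8 c9 by argo
qed

lemma easy_dir: assumes "in_Qstar H" shows "Free N_graphs H"
proof -
  obtain G :: "nat graph" where sgG: "simple_graph G" and emb: "induced_embeds H (Qgraph G)"
    using assms unfolding in_Qstar_def by blast
  show ?thesis unfolding Free_def N_graphs_def
  proof (intro ballI notI)
    fix F assume F: "F \<in> {co_cycle 3, co_cycle 5, co_cycle 7, G1, G2, G3, G4, G5k 0, G5k 1, G5k 2, G5k 3}"
      and e: "induced_embeds F H"
    have "induced_embeds F (Qgraph G)" by (rule embeds_trans[OF e emb])
    then show False using F notQ_cc3[OF sgG] notQ_cc5[OF sgG] notQ_cc7[OF sgG] notQ_G1[OF sgG]
      notQ_G2[OF sgG] notQ_G3[OF sgG] notQ_G4[OF sgG] notQ_G5k0[OF sgG] notQ_G5k1[OF sgG]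
      notQ_G5k2[OF sgG] notQ_G5k3[OF sgG] by blast
  qed
qed




locale fgc = fgr +
  fixes col :: "'a \<Rightarrow> bool"
  assumes colp: "fe H x y \<Longrightarrow> col x \<noteq> col y"
begin

abbreviation conn where "conn \<equiv> (fe H)\<^sup>*\<^sup>*"

lemma conn_sym: "conn x y \<Longrightarrow> conn y x"
  using symp_rtranclp[OF fe_symp] by (meson sympD)

lemma conn_edge: "fe H x y \<Longrightarrow> conn x y" by auto

lemma conn_trans: "conn x y \<Longrightarrow> conn y z \<Longrightarrow> conn x z" by auto

lemma same_col: "col x = col y \<Longrightarrow> \<not> fe H x y" using colp by blast

lemma nc_ne: "\<not> conn x y \<Longrightarrow> x \<noteq> y" by auto
lemma nc_nadj: "\<not> conn x y \<Longrightarrow> \<not> fe H x y" by auto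
lemma nc_step: "\<not> conn x y \<Longrightarrow> fe H y z \<Longrightarrow> \<not> conn x z"
  by (meson conn_edge conn_sym conn_trans)
lemma nc_step': "\<not> conn x y \<Longrightarrow> fe H x z \<Longrightarrow> \<not> conn z y"
  by (meson conn_edge conn_trans)
lemma nc_symm: "\<not> conn x y \<Longrightarrow> \<not> conn y x" using conn_sym by blast

lemma caseB:
  assumes nB: "\<And>x1 y1 x2 y2. fe H x1 y1 \<Longrightarrow> fe H x2 y2 \<Longrightarrow> distinct [x1,y1,x2,y2] \<Longrightarrow> conn x1 x2 \<Longrightarrow> False"
  shows "\<exists>A. good_part H A"
proof -
  let ?V = "verts H"
  define nb2 where "nb2 v \<longleftrightarrow> (\<exists>a b. a \<noteq> b \<and> fe H v a \<and> fe H v b)" for v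
  define center where "center v \<longleftrightarrow> v \<in> ?V \<and> (nb2 v \<or> (\<exists>w. fe H v w \<and> (\<forall>z. fe H v z \<longrightarrow> z = w) \<and> (\<forall>z. fe H w z \<longrightarrow> z = v) \<and> col v))" for v
  define A where "A = {v. center v}"
  have B0: "\<not> (nb2 x \<and> nb2 y)" if xy: "fe H x y" for x y
  proof
    assume "nb2 x \<and> nb2 y"
    then obtain a where a: "fe H x a" "a \<noteq> y" unfolding nb2_def by blast
    obtain c where c: "fe H y c" "c \<noteq> x" using \<open>nb2 x \<and> nb2 y\<close> unfolding nb2_def by blast
    show False
    proof (cases "a = c")
      case True
      then show False using no_tri[of x y a] xy a c fe_commute by blast
    next
      case False
      have "distinct [x,a,y,c]" using a c False xy fe_ne fe_commute by auto
      then show False using nB[of x a y c] a c xy by (auto intro: conn_edge)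
    qed
  qed
  have nbr_of_center: "\<exists>l. fe H c l" if "center c" for c
    using that unfolding center_def nb2_def by blast
  have B1: "\<not> fe H x y" if cx: "center x" and cy: "center y" for x y
  proof
    assume xy: "fe H x y"
    have yx: "fe H y x" using xy fe_commute by simp
    consider "nb2 x" "nb2 y" | "nb2 x" "\<not> nb2 y" | "\<not> nb2 x" "nb2 y" | "\<not> nb2 x" "\<not> nb2 y" by blast
    then show False
    proof cases
      case 1 then show False using B0[OF xy] by blast
    next
      case 2
      then obtain w where w: "fe H y w" "\<forall>z. fe H w z \<longrightarrow> z = y" "\<forall>z. fe H y z \<longrightarrow> z = w"
        using cy unfolding center_def by blast
      then have "w = x" using yx by blast
      then show False using 2(1) w(2) unfolding nb2_def by (metis fe_commute)
    next
      case 3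
      then obtain w where w: "fe H x w" "\<forall>z. fe H w z \<longrightarrow> z = x" "\<forall>z. fe H x z \<longrightarrow> z = w"
        using cx unfolding center_def by blast
      then have "w = y" using xy by blast
      then show False using 3(2) w(2) unfolding nb2_def by (metis fe_commute)
    next
      case 4
      then have "col x" "col y" using cx cy unfolding center_def by auto
      then show False using colp[OF xy] by simp
    qed
  qed
  have B2: "\<not> fe H x y" if "\<not> center x" "\<not> center y" for x y
  proof
    assume xy: "fe H x y"
    have yx: "fe H y x" using xy fe_commute by simp
    have V: "x \<in> ?V" "y \<in> ?V" using xy fe_V1 fe_V2 by auto
    have nx: "\<not> nb2 x" "\<not> nb2 y" using that V unfolding center_def by auto
    have Nx: "\<forall>z. fe H x z \<longrightarrow> z = y" using nx(1) xy unfolding nb2_def by blast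
    have Ny: "\<forall>z. fe H y z \<longrightarrow> z = x" using nx(2) yx unfolding nb2_def by blast
    have "col x \<or> col y" using colp[OF xy] by blast
    then show False using that V Nx Ny xy yx unfolding center_def by blast
  qed
  have B3: "\<not> conn c1 c2" if c1c: "center c1" and c2c: "center c2" and c12: "c1 \<noteq> c2" for c1 c2
  proof
    assume cc: "conn c1 c2"
    show False
    proof (cases "\<exists>l1 l2. fe H c1 l1 \<and> fe H c2 l2 \<and> l1 \<noteq> l2")
      case True
      then obtain l1 l2 where l: "fe H c1 l1" "fe H c2 l2" "l1 \<noteq> l2" by blast
      have "l1 \<noteq> c2" using B1[OF c1c c2c] l(1) by blast
      moreover have "l2 \<noteq> c1" using B1[OF c2c c1c] l(2) by blast
      ultimately have "distinct [c1,l1,c2,l2]" using l c12 fe_ne by auto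
      then show False using nB[of c1 l1 c2 l2] l cc by blast
    next
      case False
      obtain l1 where l1: "fe H c1 l1" using nbr_of_center[OF c1c] by blast
      obtain l2 where l2: "fe H c2 l2" using nbr_of_center[OF c2c] by blast
      have N1: "\<forall>z. fe H c1 z \<longrightarrow> z = l2" using False l2 by blast
      have N2: "\<forall>z. fe H c2 z \<longrightarrow> z = l1" using False l1 by blast
      have "l1 = l2" using N1 l1 by blast
      have "\<not> nb2 c1" using N1 unfolding nb2_def by blast
      then obtain w where w: "fe H c1 w" "\<forall>z. fe H w z \<longrightarrow> z = c1" using c1c unfolding center_def by blast
      have "w = l1" using N1 w(1) \<open>l1 = l2\<close> by blast
      moreover have "fe H l1 c2" using l2 \<open>l1 = l2\<close> fe_commute by simp
      ultimately show False using w(2) c12 by blast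
    qed
  qed
  have B4: "\<exists>w. center w \<and> (\<forall>z. fe H b z \<longleftrightarrow> z = w)" if nbcb: "\<not> center b" and bw0: "fe H b w0" for b w0
  proof -
    have bV: "b \<in> ?V" using bw0 fe_V1 by blast
    have nb: "\<not> nb2 b" using nbcb bV unfolding center_def by blast
    have Nb: "\<forall>z. fe H b z \<longleftrightarrow> z = w0" using nb bw0 unfolding nb2_def by blast
    have w0V: "w0 \<in> ?V" using bw0 fe_V2 by blast
    have "center w0"
    proof (cases "nb2 w0")
      case True then show ?thesis using w0V unfolding center_def by blast
    next
      case False
      have wb: "fe H w0 b" using bw0 fe_commute by simp
      have Nw: "\<forall>z. fe H w0 z \<longrightarrow> z = b" using False wb unfolding nb2_def by blast
      have "\<not> col b" using nbcb bV Nb Nw bw0 unfolding center_def by blast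
      then have "col w0" using colp[OF bw0] by blast
      then show ?thesis using w0V wb Nw Nb unfolding center_def by blast
    qed
    then show ?thesis using Nb by blast
  qed
  have AV: "A \<subseteq> ?V" unfolding A_def center_def by blast
  have iso_out: "\<not> fe H b z" if "\<forall>z. \<not> fe H b z" for b z using that by blast
  have good: "good_part H A"
    unfolding good_part_def
  proof (intro conjI ballI impI)
    show "A \<subseteq> ?V" by (rule AV)
  next
    fix x y assume "x \<in> A" "y \<in> A" then show "\<not> fe H x y" using B1 unfolding A_def by blast
  next
    fix x y assume "x \<in> ?V - A" "y \<in> ?V - A" then show "\<not> fe H x y" using B2 unfolding A_def by blast
  next
    fix b a1 a2 a3 assume b: "b \<in> ?V - A" and a: "a1 \<in> A" "a2 \<in> A" "a3 \<in> A"
      and ne: "a1 \<noteq> a2 \<and> a1 \<noteq> a3 \<and> a2 \<noteq> a3"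
    show "fe H b a1 \<or> fe H b a2 \<or> fe H b a3"
    proof (rule ccontr)
      assume nf: "\<not> (fe H b a1 \<or> fe H b a2 \<or> fe H b a3)"
      have nf1: "\<not> fe H b a1" "\<not> fe H b a2" "\<not> fe H b a3" using nf by auto
      have ca: "center a1" "center a2" "center a3" using a unfolding A_def by auto
      have nbc: "\<not> center b" using b unfolding A_def by blast
      have bV: "b \<in> ?V" using b by blast
      have aV: "a1 \<in> ?V" "a2 \<in> ?V" "a3 \<in> ?V" using AV a by auto
      have bne: "b \<noteq> a1" "b \<noteq> a2" "b \<noteq> a3" using b a by auto
      obtain l1 where l1: "fe H a1 l1" using nbr_of_center[OF ca(1)] by blast
      obtain l2 where l2: "fe H a2 l2" using nbr_of_center[OF ca(2)] by blast
      obtain l3 where l3: "fe H a3 l3" using nbr_of_center[OF ca(3)] by blast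
      have n12: "\<not> conn a1 a2" using B3[OF ca(1) ca(2)] ne by blast
      have n13: "\<not> conn a1 a3" using B3[OF ca(1) ca(3)] ne by blast
      have n23: "\<not> conn a2 a3" using B3[OF ca(2) ca(3)] ne by blast
      show False
      proof (cases "\<exists>w. fe H b w")
        case False
        have iso: "\<And>z. \<not> fe H b z" using False by blast
        have "a2 \<noteq> l2" using l2 fe_ne by blast
        moreover have "a2 \<noteq> l3" using nc_ne[OF nc_step[OF n23 l3]] .
        moreover have "l2 \<noteq> a3" using nc_ne[OF nc_step'[OF n23 l2]] .
        moreover have "l2 \<noteq> l3" using nc_ne[OF nc_step[OF nc_step'[OF n23 l2] l3]] .
        moreover have "l2 \<noteq> b" using l2 iso fe_commute by metis
        moreover have "l2 \<noteq> a1" using nc_ne[OF nc_step[OF n12 l2]] by metis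
        moreover have "a3 \<noteq> l3" using l3 fe_ne by blast
        moreover have "l3 \<noteq> b" using l3 iso fe_commute by metis
        moreover have "l3 \<noteq> a1" using nc_ne[OF nc_step[OF n13 l3]] by metis
        ultimately have dist: "distinct [a2,l2,a3,l3,b,a1]" using ne bne by auto
        show False
          by (rule S_config[OF l2 l3 dist bV aV(1) iso iso iso iso
            nc_nadj[OF n12] nc_nadj[OF nc_step[OF n12 l2]] nc_nadj[OF n13] nc_nadj[OF nc_step[OF n13 l3]] iso])
      next
        case True
        then obtain w0 where "fe H b w0" by blast
        then obtain w where cw: "center w" and Nb: "\<forall>z. fe H b z \<longleftrightarrow> z = w" using B4[OF nbc] by blast
        have bw: "fe H b w" using Nb by blast
        have wa: "w \<noteq> a1" "w \<noteq> a2" "w \<noteq> a3" using nf1 bw by auto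
        have nw1: "\<not> conn w a1" using B3[OF cw ca(1)] wa by blast
        have nw2: "\<not> conn w a2" using B3[OF cw ca(2)] wa by blast
        have nw3: "\<not> conn w a3" using B3[OF cw ca(3)] wa by blast
        have "b \<noteq> w" using bw fe_ne by blast
        moreover have "l1 \<noteq> w" using nc_ne[OF nc_step[OF nw1 l1]] by metis
        moreover have "l1 \<noteq> b" using l1 Nb wa fe_commute by metis
        moreover have "a2 \<noteq> l1" using nc_ne[OF nc_step[OF nc_symm[OF n12] l1]] .
        moreover have "a3 \<noteq> l1" using nc_ne[OF nc_step[OF nc_symm[OF n13] l1]] .
        moreover have "a1 \<noteq> l1" using l1 fe_ne by blast
        ultimately have dist: "distinct [b,w,a1,l1,a2,a3]" using ne wa bne by auto
        have x1: "\<not> fe H a2 b" using nf1 fe_commute by metis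
        have x2: "\<not> fe H a3 b" using nf1 fe_commute by metis
        have x3: "\<not> fe H a2 a1" using nc_nadj[OF nc_symm[OF n12]] .
        have x4: "\<not> fe H a3 a1" using nc_nadj[OF nc_symm[OF n13]] .
        have x5: "\<not> fe H a2 w" using nc_nadj[OF nc_symm[OF nw2]] .
        have x6: "\<not> fe H a3 w" using nc_nadj[OF nc_symm[OF nw3]] .
        have x7: "\<not> fe H a2 l1" using nc_nadj[OF nc_step[OF nc_symm[OF n12] l1]] .
        have x8: "\<not> fe H a3 l1" using nc_nadj[OF nc_step[OF nc_symm[OF n13] l1]] .
        show False
          by (rule S_config[OF bw l1 dist aV(2) aV(3) x1 x5 x3 x7 x2 x6 x4 x8 nc_nadj[OF n23]])
      qed
    qed
  next
    fix b b' a a' assume b: "b \<in> ?V - A" "b' \<in> ?V - A" and a: "a \<in> A" "a' \<in> A"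
      and ne: "b \<noteq> b' \<and> a \<noteq> a'"
    show "fe H b a \<or> fe H b a' \<or> fe H b' a \<or> fe H b' a'"
    proof (rule ccontr)
      assume nf: "\<not> (fe H b a \<or> fe H b a' \<or> fe H b' a \<or> fe H b' a')"
      have nf1: "\<not> fe H b a" "\<not> fe H b a'" "\<not> fe H b' a" "\<not> fe H b' a'" using nf by auto
      have nf2: "\<not> fe H a b" "\<not> fe H a' b" "\<not> fe H a b'" "\<not> fe H a' b'" using nf1 fe_commute by metis+
      have ca: "center a" "center a'" using a unfolding A_def by auto
      have nbc: "\<not> center b" "\<not> center b'" using b unfolding A_def by auto
      have bV: "b \<in> ?V" "b' \<in> ?V" using b by auto
      have aV: "a \<in> ?V" "a' \<in> ?V" using a AV by auto
      have bne: "b \<noteq> a" "b \<noteq> a'" "b' \<noteq> a" "b' \<noteq> a'" using a b by auto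
      have ne1: "b \<noteq> b'" "a \<noteq> a'" using ne by auto
      obtain l where l: "fe H a l" using nbr_of_center[OF ca(1)] by blast
      obtain l' where l': "fe H a' l'" using nbr_of_center[OF ca(2)] by blast
      have naa: "\<not> conn a a'" using B3[OF ca] ne by blast
      have aa: "\<not> fe H a a'" using B1[OF ca] .
      have aa': "\<not> fe H a' a" using B1[OF ca(2) ca(1)] .
      have bbn: "\<not> fe H b b'" using B2[OF nbc] .
      have bbn': "\<not> fe H b' b" using B2[OF nbc(2) nbc(1)] .
      have al: "a \<noteq> l" "a' \<noteq> l'" using l l' fe_ne by auto
      have al': "a \<noteq> l'" using nc_ne[OF nc_step[OF naa l']] .
      have la': "l \<noteq> a'" using nc_ne[OF nc_step'[OF naa l]] .
      have ll': "l \<noteq> l'" using nc_ne[OF nc_step[OF nc_step'[OF naa l] l']] .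
      have a'l: "\<not> fe H a' l" using nc_nadj[OF nc_step[OF nc_symm[OF naa] l]] .
      have al'n: "\<not> fe H a l'" using nc_nadj[OF nc_step[OF naa l']] .
      have lb: "l \<noteq> b" "l \<noteq> b'" "l' \<noteq> b" "l' \<noteq> b'" using l l' nf2 by auto
      show False
      proof (cases "\<exists>w. fe H b w"; cases "\<exists>w. fe H b' w")
        assume nb: "\<not> (\<exists>w. fe H b w)" and nb': "\<not> (\<exists>w. fe H b' w)"
        have isb: "\<And>z. \<not> fe H b z" using nb by blast
        have isb': "\<And>z. \<not> fe H b' z" using nb' by blast
        have dist: "distinct [a,l,a',l',b,b']" using al al' la' ll' lb bne ne1 by auto
        show False by (rule S_config[OF l l' dist bV isb isb isb isb isb' isb' isb' isb' isb])
      next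
        assume nb: "\<not> (\<exists>w. fe H b w)" and yb': "\<exists>w. fe H b' w"
        have isb: "\<And>z. \<not> fe H b z" using nb by blast
        obtain w0 where "fe H b' w0" using yb' by blast
        then obtain w where cw: "center w" and Nb: "\<forall>z. fe H b' z \<longleftrightarrow> z = w" using B4[OF nbc(2)] by blast
        have bw: "fe H b' w" using Nb by blast
        have wb: "fe H w b'" using bw fe_commute by metis
        have wa: "w \<noteq> a" "w \<noteq> a'" using nf1 bw by auto
        have nwa: "\<not> conn w a" "\<not> conn w a'" using B3[OF cw ca(1)] B3[OF cw ca(2)] wa by auto
        have lw: "l \<noteq> w" using nc_ne[OF nc_step[OF nwa(1) l]] by metis
        have wb2: "w \<noteq> b'" "w \<noteq> b" using bw fe_ne isb fe_commute by metis+
        have dist: "distinct [a,l,w,b',b,a']" using al la' lw lb wa wb2 bne ne1 by auto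
        have x1: "\<not> fe H a' w" using nc_nadj[OF nc_symm[OF nwa(2)]] .
        show False by (rule S_config[OF l wb dist bV(1) aV(2) isb isb isb isb aa' a'l x1 nf2(4) isb])
      next
        assume yb: "\<exists>w. fe H b w" and nb': "\<not> (\<exists>w. fe H b' w)"
        have isb': "\<And>z. \<not> fe H b' z" using nb' by blast
        obtain w0 where "fe H b w0" using yb by blast
        then obtain w where cw: "center w" and Nb: "\<forall>z. fe H b z \<longleftrightarrow> z = w" using B4[OF nbc(1)] by blast
        have bw: "fe H b w" using Nb by blast
        have wb: "fe H w b" using bw fe_commute by metis
        have wa: "w \<noteq> a" "w \<noteq> a'" using nf1 bw by auto
        have nwa: "\<not> conn w a" "\<not> conn w a'" using B3[OF cw ca(1)] B3[OF cw ca(2)] wa by auto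
        have lw: "l \<noteq> w" using nc_ne[OF nc_step[OF nwa(1) l]] by metis
        have wb2: "w \<noteq> b" "w \<noteq> b'" using bw fe_ne isb' fe_commute by metis+
        have dist: "distinct [a,l,w,b,b',a']" using al la' lw lb wa wb2 bne ne1 by auto
        have x1: "\<not> fe H a' w" using nc_nadj[OF nc_symm[OF nwa(2)]] .
        show False by (rule S_config[OF l wb dist bV(2) aV(2) isb' isb' isb' isb' aa' a'l x1 nf2(2) isb'])
      next
        assume yb: "\<exists>w. fe H b w" and yb': "\<exists>w. fe H b' w"
        obtain w0 where "fe H b w0" using yb by blast
        then obtain w where cw: "center w" and Nb: "\<forall>z. fe H b z \<longleftrightarrow> z = w" using B4[OF nbc(1)] by blast
        obtain w0' where "fe H b' w0'" using yb' by blast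
        then obtain w' where cw': "center w'" and Nb': "\<forall>z. fe H b' z \<longleftrightarrow> z = w'" using B4[OF nbc(2)] by blast
        have bw: "fe H b w" "fe H b' w'" using Nb Nb' by auto
        have wa: "w \<noteq> a" "w \<noteq> a'" "w' \<noteq> a" "w' \<noteq> a'" using nf1 bw by auto
        show False
        proof (cases "w = w'")
          case False
          have x: "b \<noteq> w" "b' \<noteq> w'" using bw fe_ne by auto
          have y: "b \<noteq> w'" using bbn' bw(2) by metis
          have z: "w \<noteq> b'" using bbn bw(1) by metis
          have dist: "distinct [b,w,b',w',a,a']" using x y z False wa bne ne1 by auto
          have c1: "\<not> fe H a w" "\<not> fe H a w'" "\<not> fe H a' w" "\<not> fe H a' w'"
            using B1[OF ca(1) cw] B1[OF ca(1) cw'] B1[OF ca(2) cw] B1[OF ca(2) cw'] by auto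
          show False by (rule S_config[OF bw dist aV nf2(1) c1(1) nf2(3) c1(2) nf2(2) c1(3) nf2(4) c1(4) aa])
        next
          case True
          have c1: "\<not> fe H a w" "\<not> fe H a' w" using B1[OF ca(1) cw] B1[OF ca(2) cw] by auto
          have bl: "\<not> fe H b l" "\<not> fe H b l'" "\<not> fe H b' l" "\<not> fe H b' l'"
            using Nb Nb' True l l' c1 by auto
          have dist: "distinct [a,l,a',l',b,b']" using al al' la' ll' lb bne ne1 by auto
          show False by (rule S_config[OF l l' dist bV nf1(1) bl(1) nf1(2) bl(2) nf1(3) bl(3) nf1(4) bl(4) bbn])
        qed
      qed
    qed
  qed
  then show ?thesis by blast
qed

end



context fgc begin

lemma conn_closed: "conn x y \<Longrightarrow> x \<in> S \<Longrightarrow> (\<And>p q. p \<in> S \<Longrightarrow> fe H p q \<Longrightarrow> q \<in> S) \<Longrightarrow> y \<in> S"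
  by (induction rule: rtranclp_induct) auto

lemma L1:
  assumes V: "a \<in> verts H" "a' \<in> verts H" and cl: "col a = col a'" "col b = col b'" "col a \<noteq> col b"
    and ne: "a \<noteq> a'" "b \<noteq> b'"
    and nf: "\<not> fe H a b" "\<not> fe H a b'" "\<not> fe H a' b" "\<not> fe H a' b'"
    and bv: "fe H b v" and bw: "fe H b' w" and vw: "v \<noteq> w"
  shows False
proof -
  have vb: "fe H v b" and wb': "fe H w b'" using bv bw fe_commute by metis+
  have cv: "col v \<noteq> col b" "col w \<noteq> col b'" using colp bv bw by auto
  have "v \<noteq> b" "w \<noteq> b'" using bv bw fe_ne by auto
  moreover have "v \<noteq> b'" using cv cl by auto
  moreover have "b \<noteq> w" using cv cl by auto
  moreover have "v \<noteq> a" "v \<noteq> a'" "w \<noteq> a" "w \<noteq> a'" using nf bv bw fe_commute by metis+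
  moreover have "b \<noteq> a" "b \<noteq> a'" "b' \<noteq> a" "b' \<noteq> a'" using cl by auto
  ultimately have dist: "distinct [v,b,w,b',a,a']" using ne vw by auto
  have n1: "\<not> fe H a v" "\<not> fe H a w" "\<not> fe H a' v" "\<not> fe H a' w" using same_col cv cl by metis+
  have n2: "\<not> fe H a b" "\<not> fe H a b'" "\<not> fe H a' b" "\<not> fe H a' b'" using nf by auto
  have n3: "\<not> fe H a a'" using same_col cl by metis
  show False by (rule S_config[OF vb wb' dist V n1(1) n2(1) n1(2) n2(2) n1(3) n2(3) n1(4) n2(4) n3])
qed

lemma unique_nbr:
  assumes V: "a \<in> verts H" "a' \<in> verts H" and cl: "col a = col a'" "col b = col b'" "col a \<noteq> col b"
    and ne: "a \<noteq> a'" "b \<noteq> b'"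
    and nf: "\<not> fe H a b" "\<not> fe H a b'" "\<not> fe H a' b" "\<not> fe H a' b'"
    and nb: "fe H b w0" "fe H b' w1"
  shows "\<exists>w. (\<forall>z. fe H b z \<longleftrightarrow> z = w) \<and> (\<forall>z. fe H b' z \<longleftrightarrow> z = w)"
proof -
  have eq: "v = w" if "fe H b v" "fe H b' w" for v w
    using L1[OF V cl ne nf that] by blast
  have "\<forall>z. fe H b z \<longleftrightarrow> z = w1" using eq nb by blast
  moreover have "\<forall>z. fe H b' z \<longleftrightarrow> z = w1" using eq nb by blast
  ultimately show ?thesis by blast
qed

lemma no22:
  assumes conn_all: "\<And>x y. x \<in> verts H \<Longrightarrow> y \<in> verts H \<Longrightarrow> conn x y"
    and nbr: "\<And>x. x \<in> verts H \<Longrightarrow> \<exists>y. fe H x y"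
    and V: "a \<in> verts H" "a' \<in> verts H" "b \<in> verts H" "b' \<in> verts H"
    and cl: "col a = col a'" "col b = col b'" "col a \<noteq> col b"
    and ne: "a \<noteq> a'" "b \<noteq> b'"
    and nf: "\<not> fe H a b" "\<not> fe H a b'" "\<not> fe H a' b" "\<not> fe H a' b'"
  shows False
proof -
  obtain w0 where "fe H b w0" using nbr V by blast
  moreover obtain w1 where "fe H b' w1" using nbr V by blast
  ultimately obtain w where Nb: "\<forall>z. fe H b z \<longleftrightarrow> z = w" and Nb': "\<forall>z. fe H b' z \<longleftrightarrow> z = w"
    using unique_nbr[OF V(1,2) cl ne nf] by blast
  have nf': "\<not> fe H b a" "\<not> fe H b a'" "\<not> fe H b' a" "\<not> fe H b' a'" using nf fe_commute by metis+
  obtain u0 where "fe H a u0" using nbr V by blast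
  moreover obtain u1 where "fe H a' u1" using nbr V by blast
  moreover have cl3': "col b \<noteq> col a" using cl(3) by simp
  ultimately obtain u where Na: "\<forall>z. fe H a z \<longleftrightarrow> z = u" and Na': "\<forall>z. fe H a' z \<longleftrightarrow> z = u"
    using unique_nbr[OF V(3,4) cl(2,1) cl3' ne(2,1) nf'(1,2,3,4)] by blast
  have au: "fe H a u" "fe H a' u" and bw: "fe H b w" "fe H b' w" using Na Na' Nb Nb' by auto
  have cu: "col u \<noteq> col a" and cw: "col w \<noteq> col b" using colp au bw by auto
  have uw: "u \<noteq> w" using cu cw cl by auto
  show False
  proof (cases "fe H u w")
    case True
    have uV: "u \<in> verts H" and wV: "w \<in> verts H" using au bw fe_V2 by auto
    have "u \<noteq> a" "u \<noteq> a'" "w \<noteq> b" "w \<noteq> b'" using au bw fe_ne by auto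
    moreover have "u \<noteq> b" "u \<noteq> b'" using nf au by auto
    moreover have "w \<noteq> a" "w \<noteq> a'" using nf' bw by auto
    moreover have "a \<noteq> b" "a \<noteq> b'" "a' \<noteq> b" "a' \<noteq> b'" using cl by auto
    ultimately have dist: "distinct [a,b,b',a',u,w]" using uw ne by auto
    have x: "\<not> fe H a w" "\<not> fe H a' w" using Na Na' uw by auto
    have y: "\<not> fe H b u" "\<not> fe H b' u" using Nb Nb' uw by auto
    have z: "\<not> fe H b b'" "\<not> fe H a a'" using same_col cl by metis+
    have ua: "fe H u a" "fe H u a'" "fe H w b" "fe H w b'" using au bw fe_commute by metis+
    show False
      by (rule T_config[OF V(1) V(3) V(4) V(2) uV wV dist True ua(1) ua(2) ua(3) ua(4)
          nf(1) nf(2) z(2) x(1) z(1) nf'(2) y(1) nf'(4) y(2) x(2)])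
  next
    case False
    have ex: "\<exists>x1 y1. fe H u x1 \<and> fe H x1 y1 \<and> y1 \<noteq> u"
    proof (rule ccontr)
      assume nex: "\<not> (\<exists>x1 y1. fe H u x1 \<and> fe H x1 y1 \<and> y1 \<noteq> u)"
      have "w \<in> {u} \<union> {z. fe H u z}"
      proof (rule conn_closed[of u w])
        show "conn u w" using conn_all au bw fe_V2 by blast
        show "u \<in> {u} \<union> {z. fe H u z}" by simp
        fix p q assume "p \<in> {u} \<union> {z. fe H u z}" "fe H p q"
        then show "q \<in> {u} \<union> {z. fe H u z}" using nex by blast
      qed
      then show False using uw False by blast
    qed
    then obtain x1 y1 where ux: "fe H u x1" and xy: "fe H x1 y1" and yu: "y1 \<noteq> u" by blast
    have cx: "col x1 \<noteq> col u" "col y1 \<noteq> col x1" using colp ux xy by auto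
    have "a \<noteq> u" using au fe_ne by blast
    moreover have "a \<noteq> x1" using Na xy yu by blast
    moreover have "a \<noteq> y1" "a \<noteq> b" "a \<noteq> b'" using cx cu cl by auto
    moreover have "u \<noteq> x1" using ux fe_ne by blast
    moreover have "u \<noteq> b" "u \<noteq> b'" using nf au by auto
    moreover have "x1 \<noteq> y1" using xy fe_ne by blast
    moreover have "x1 \<noteq> b" "x1 \<noteq> b'" using cx cu cl by auto
    moreover have "y1 \<noteq> b" "y1 \<noteq> b'" using Nb Nb' xy ux False fe_commute by metis+
    ultimately have dist: "distinct [a,u,x1,y1,b,b']" using yu ne by auto
    have bV: "b \<in> verts H" "b' \<in> verts H" using V by auto
    have n1: "\<not> fe H b u" "\<not> fe H b' u" "\<not> fe H b y1" "\<not> fe H b' y1"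
      using same_col cx cu cl by metis+
    have n2: "\<not> fe H b x1" "\<not> fe H b' x1" using Nb Nb' ux False by auto
    have n3: "\<not> fe H b b'" using same_col cl by metis
    show False
      by (rule S_config[OF au(1) xy dist bV nf'(1) n1(1) n2(1) n1(3) nf'(3) n1(2) n2(2) n1(4) n3])
  qed
qed


lemma notboth:
  assumes conn_all: "\<And>x y. x \<in> verts H \<Longrightarrow> y \<in> verts H \<Longrightarrow> conn x y"
    and nbr: "\<And>x. x \<in> verts H \<Longrightarrow> \<exists>y. fe H x y"
    and V: "p0 \<in> verts H" "p1 \<in> verts H" "p2 \<in> verts H" "p3 \<in> verts H"
       "q0 \<in> verts H" "q1 \<in> verts H" "q2 \<in> verts H" "q3 \<in> verts H"
    and cp: "col p1 = col p0" "col p2 = col p0" "col p3 = col p0" "col q0 \<noteq> col p0"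
       "col q1 = col q0" "col q2 = col q0" "col q3 = col q0"
    and dp: "distinct [p1,p2,p3]" and dq: "distinct [q1,q2,q3]"
    and m0: "\<not> fe H q0 p1" "\<not> fe H q0 p2" "\<not> fe H q0 p3" "\<not> fe H p0 q1" "\<not> fe H p0 q2" "\<not> fe H p0 q3"
  shows False
proof -
  have N22: False if "a \<in> verts H" "a' \<in> verts H" "b \<in> verts H" "b' \<in> verts H"
    "col a = col a'" "col b = col b'" "col a \<noteq> col b" "a \<noteq> a'" "b \<noteq> b'"
    "\<not> fe H a b" "\<not> fe H a b'" "\<not> fe H a' b" "\<not> fe H a' b'" for a a' b b'
    using no22[OF conn_all nbr that] .
  have mq: "\<And>p. p \<in> {p1,p2,p3} \<Longrightarrow> \<not> fe H q0 p \<and> \<not> fe H p q0 \<and> col p = col p0 \<and> p \<in> verts H"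
    using m0 cp V fe_commute by auto
  have mp: "\<And>q. q \<in> {q1,q2,q3} \<Longrightarrow> \<not> fe H p0 q \<and> \<not> fe H q p0 \<and> col q = col q0 \<and> q \<in> verts H"
    using m0 cp V fe_commute by auto
  show False
  proof (cases "fe H p0 q0")
    case True
    have p0ne: "p0 \<noteq> p1" "p0 \<noteq> p2" "p0 \<noteq> p3" using True m0 fe_commute by metis+
    have q0ne: "q0 \<noteq> q1" "q0 \<noteq> q2" "q0 \<noteq> q3" using True m0 fe_commute by metis+
    have cpq: "col p0 \<noteq> col q0" using cp by auto
    have m0s: "\<not> fe H p1 q0" "\<not> fe H p2 q0" "\<not> fe H p3 q0" using m0 fe_commute by metis+
    have N22': False if "a \<in> {p0,p1,p2,p3}" "a' \<in> {p0,p1,p2,p3}" "b \<in> {q0,q1,q2,q3}" "b' \<in> {q0,q1,q2,q3}"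
      "a \<noteq> a'" "b \<noteq> b'"
      "\<not> fe H a b" "\<not> fe H a b'" "\<not> fe H a' b" "\<not> fe H a' b'" for a a' b b'
      apply (rule N22[of a a' b b'])
      using that V cp by auto
    have pm0: "fe H p1 q1 \<or> fe H p1 q2" by (rule ccontr) (use N22'[of p0 p1 q1 q2] p0ne q0ne dp dq m0 m0s in auto)
    have pm1: "fe H p1 q1 \<or> fe H p2 q1" by (rule ccontr) (use N22'[of p1 p2 q0 q1] p0ne q0ne dp dq m0 m0s in auto)
    have pm2: "fe H p1 q1 \<or> fe H p1 q3" by (rule ccontr) (use N22'[of p0 p1 q1 q3] p0ne q0ne dp dq m0 m0s in auto)
    have pm3: "fe H p1 q1 \<or> fe H p3 q1" by (rule ccontr) (use N22'[of p1 p3 q0 q1] p0ne q0ne dp dq m0 m0s in auto)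
    have pm4: "fe H p1 q2 \<or> fe H p1 q3" by (rule ccontr) (use N22'[of p0 p1 q2 q3] p0ne q0ne dp dq m0 m0s in auto)
    have pm5: "fe H p2 q1 \<or> fe H p3 q1" by (rule ccontr) (use N22'[of p2 p3 q0 q1] p0ne q0ne dp dq m0 m0s in auto)
    have pm6: "fe H p2 q1 \<or> fe H p2 q2" by (rule ccontr) (use N22'[of p0 p2 q1 q2] p0ne q0ne dp dq m0 m0s in auto)
    have pm7: "fe H p1 q2 \<or> fe H p2 q2" by (rule ccontr) (use N22'[of p1 p2 q0 q2] p0ne q0ne dp dq m0 m0s in auto)
    have pm8: "fe H p2 q1 \<or> fe H p2 q3" by (rule ccontr) (use N22'[of p0 p2 q1 q3] p0ne q0ne dp dq m0 m0s in auto)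
    have pm9: "fe H p1 q2 \<or> fe H p3 q2" by (rule ccontr) (use N22'[of p1 p3 q0 q2] p0ne q0ne dp dq m0 m0s in auto)
    have pm10: "fe H p2 q2 \<or> fe H p2 q3" by (rule ccontr) (use N22'[of p0 p2 q2 q3] p0ne q0ne dp dq m0 m0s in auto)
    have pm11: "fe H p2 q2 \<or> fe H p3 q2" by (rule ccontr) (use N22'[of p2 p3 q0 q2] p0ne q0ne dp dq m0 m0s in auto)
    have pm12: "fe H p3 q1 \<or> fe H p3 q2" by (rule ccontr) (use N22'[of p0 p3 q1 q2] p0ne q0ne dp dq m0 m0s in auto)
    have pm13: "fe H p1 q3 \<or> fe H p2 q3" by (rule ccontr) (use N22'[of p1 p2 q0 q3] p0ne q0ne dp dq m0 m0s in auto)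
    have pm14: "fe H p3 q1 \<or> fe H p3 q3" by (rule ccontr) (use N22'[of p0 p3 q1 q3] p0ne q0ne dp dq m0 m0s in auto)
    have pm15: "fe H p1 q3 \<or> fe H p3 q3" by (rule ccontr) (use N22'[of p1 p3 q0 q3] p0ne q0ne dp dq m0 m0s in auto)
    have pm16: "fe H p3 q2 \<or> fe H p3 q3" by (rule ccontr) (use N22'[of p0 p3 q2 q3] p0ne q0ne dp dq m0 m0s in auto)
    have pm17: "fe H p2 q3 \<or> fe H p3 q3" by (rule ccontr) (use N22'[of p2 p3 q0 q3] p0ne q0ne dp dq m0 m0s in auto)
    have dall: "distinct [p0,p1,p2,p3,q0,q1,q2,q3]" using dp dq p0ne q0ne cp by auto
    show False
      apply (rule K_pm[of p0 p1 p2 p3 q0 q1 q2 q3])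
      using V dall True pm0 pm1 pm2 pm3 pm4 pm5 pm6 pm7 pm8 pm9 pm10 pm11 pm12 pm13 pm14 pm15 pm16 pm17 apply (simp_all only: distinct.simps list.set insert_iff empty_iff simp_thms)
      using cp same_col m0 fe_commute by metis+
  next
    case False
    obtain p p' where pp: "p \<in> {p1,p2,p3}" "p' \<in> {p1,p2,p3}" "p \<noteq> p'" "p \<noteq> p0" "p' \<noteq> p0"
      using dp by (cases "p0 = p1"; cases "p0 = p2") auto
    obtain q q' where qq: "q \<in> {q1,q2,q3}" "q' \<in> {q1,q2,q3}" "q \<noteq> q'" "q \<noteq> q0" "q' \<noteq> q0"
      using dq by (cases "q0 = q1"; cases "q0 = q2") auto
    have mqp: "\<not> fe H q0 p" "\<not> fe H p q0" "col p = col p0" "p \<in> verts H" using mq[OF pp(1)] by auto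
    have mqp': "\<not> fe H q0 p'" "\<not> fe H p' q0" "col p' = col p0" "p' \<in> verts H" using mq[OF pp(2)] by auto
    have mpq: "\<not> fe H p0 q" "\<not> fe H q p0" "col q = col q0" "q \<in> verts H" using mp[OF qq(1)] by auto
    have mpq': "\<not> fe H p0 q'" "\<not> fe H q' p0" "col q' = col q0" "q' \<in> verts H" using mp[OF qq(2)] by auto
    have cpq: "col p0 \<noteq> col q0" using cp by auto
    have e1: "fe H p q"
    proof (rule ccontr)
      assume "\<not> fe H p q"
      then show False using N22[of p0 p q0 q] V mqp mpq cpq pp qq False by metis
    qed
    have e2: "fe H p' q'"
    proof (rule ccontr)
      assume "\<not> fe H p' q'"
      then show False using N22[of p0 p' q0 q'] V mqp' mpq' cpq pp qq False by metis
    qed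
    have cc: "col p \<noteq> col q" "col p \<noteq> col q'" "col p' \<noteq> col q" "col p' \<noteq> col q'"
      "col p0 \<noteq> col q" "col p0 \<noteq> col q'" "col q0 \<noteq> col p" "col q0 \<noteq> col p'"
      using mqp mqp' mpq mpq' cpq by auto
    have dist: "distinct [p,q,p',q',p0,q0]"
      using pp qq cc cpq by (auto simp del: insert_iff)
    have n1: "\<not> fe H p0 p" "\<not> fe H p0 p'" "\<not> fe H q0 q" "\<not> fe H q0 q'"
      using same_col mqp mqp' mpq mpq' by metis+
    show False
      by (rule S_config[OF e1 e2 dist V(1) V(5) n1(1) mpq(1) n1(2) mpq'(1) mqp(1) n1(3) mqp'(1) n1(4) False])
  qed
qed

definition miss3 :: "bool \<Rightarrow> 'a \<Rightarrow> bool" where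
  "miss3 c b \<longleftrightarrow> (\<exists>a1 a2 a3. a1 \<in> verts H \<and> a2 \<in> verts H \<and> a3 \<in> verts H \<and> col a1 = c \<and> col a2 = c \<and> col a3 = c
     \<and> a1 \<noteq> a2 \<and> a1 \<noteq> a3 \<and> a2 \<noteq> a3 \<and> \<not> fe H b a1 \<and> \<not> fe H b a2 \<and> \<not> fe H b a3)"

lemma orient_col:
  assumes m: "\<forall>b\<in>verts H. col b \<noteq> c \<longrightarrow> \<not> miss3 c b"
    and n22: "\<And>a a' b b'. a \<in> verts H \<Longrightarrow> a' \<in> verts H \<Longrightarrow> b \<in> verts H \<Longrightarrow> b' \<in> verts H \<Longrightarrow>
      col a = col a' \<Longrightarrow> col b = col b' \<Longrightarrow> col a \<noteq> col b \<Longrightarrow> a \<noteq> a' \<Longrightarrow> b \<noteq> b' \<Longrightarrow>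
      \<not> fe H a b \<Longrightarrow> \<not> fe H a b' \<Longrightarrow> \<not> fe H a' b \<Longrightarrow> \<not> fe H a' b' \<Longrightarrow> False"
  shows "good_part H {v \<in> verts H. col v = c}"
  unfolding good_part_def
proof (intro conjI ballI impI)
  show "{v \<in> verts H. col v = c} \<subseteq> verts H" by blast
next
  fix x y assume "x \<in> {v \<in> verts H. col v = c}" "y \<in> {v \<in> verts H. col v = c}"
  then show "\<not> fe H x y" using same_col by auto
next
  fix x y assume "x \<in> verts H - {v \<in> verts H. col v = c}" "y \<in> verts H - {v \<in> verts H. col v = c}"
  then show "\<not> fe H x y" using same_col by auto
next
  fix b a1 a2 a3 assume b: "b \<in> verts H - {v \<in> verts H. col v = c}"
    and a: "a1 \<in> {v \<in> verts H. col v = c}" "a2 \<in> {v \<in> verts H. col v = c}" "a3 \<in> {v \<in> verts H. col v = c}"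
    and ne: "a1 \<noteq> a2 \<and> a1 \<noteq> a3 \<and> a2 \<noteq> a3"
  show "fe H b a1 \<or> fe H b a2 \<or> fe H b a3"
    using m b a ne unfolding miss3_def by blast
next
  fix b b' a a' assume b: "b \<in> verts H - {v \<in> verts H. col v = c}" "b' \<in> verts H - {v \<in> verts H. col v = c}"
    and a: "a \<in> {v \<in> verts H. col v = c}" "a' \<in> {v \<in> verts H. col v = c}"
    and ne: "b \<noteq> b' \<and> a \<noteq> a'"
  show "fe H b a \<or> fe H b a' \<or> fe H b' a \<or> fe H b' a'"
  proof (rule ccontr)
    assume "\<not> (fe H b a \<or> fe H b a' \<or> fe H b' a \<or> fe H b' a')"
    then have "\<not> fe H a b" "\<not> fe H a b'" "\<not> fe H a' b" "\<not> fe H a' b'" using fe_commute by metis+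
    then show False using n22[of a a' b b'] a b ne by auto
  qed
qed

lemma A1:
  assumes conn_all: "\<And>x y. x \<in> verts H \<Longrightarrow> y \<in> verts H \<Longrightarrow> conn x y"
    and nbr: "\<And>x. x \<in> verts H \<Longrightarrow> \<exists>y. fe H x y"
  shows "\<exists>A. good_part H A"
proof -
  have n22: "\<And>a a' b b'. a \<in> verts H \<Longrightarrow> a' \<in> verts H \<Longrightarrow> b \<in> verts H \<Longrightarrow> b' \<in> verts H \<Longrightarrow>
      col a = col a' \<Longrightarrow> col b = col b' \<Longrightarrow> col a \<noteq> col b \<Longrightarrow> a \<noteq> a' \<Longrightarrow> b \<noteq> b' \<Longrightarrow>
      \<not> fe H a b \<Longrightarrow> \<not> fe H a b' \<Longrightarrow> \<not> fe H a' b \<Longrightarrow> \<not> fe H a' b' \<Longrightarrow> False"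
    using no22[OF conn_all nbr] by blast
  show ?thesis
proof (cases "\<forall>b\<in>verts H. col b \<noteq> True \<longrightarrow> \<not> miss3 True b")
  case T: True
  have "good_part H {v \<in> verts H. col v = True}" by (rule orient_col[OF T n22])
  then show ?thesis by blast
next
  case False
  then obtain q0 where q0: "q0 \<in> verts H" "\<not> col q0" "miss3 True q0" by blast
  have mF: "\<forall>b\<in>verts H. col b \<noteq> False \<longrightarrow> \<not> miss3 False b"
  proof (intro ballI impI notI)
    fix p0 assume p0: "p0 \<in> verts H" "col p0 \<noteq> False" "miss3 False p0"
    obtain p1 p2 p3 where "p1 \<in> verts H" "p2 \<in> verts H" "p3 \<in> verts H" "col p1" "col p2" "col p3"
      "distinct [p1,p2,p3]" "\<not> fe H q0 p1" "\<not> fe H q0 p2" "\<not> fe H q0 p3"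
      using q0(3) unfolding miss3_def by auto
    moreover obtain q1 q2 q3 where "q1 \<in> verts H" "q2 \<in> verts H" "q3 \<in> verts H" "\<not> col q1" "\<not> col q2" "\<not> col q3"
      "distinct [q1,q2,q3]" "\<not> fe H p0 q1" "\<not> fe H p0 q2" "\<not> fe H p0 q3"
      using p0(3) unfolding miss3_def by auto
    ultimately show False using notboth[OF conn_all nbr, of p0 p1 p2 p3 q0 q1 q2 q3] p0 q0 by auto
  qed
  have "good_part H {v \<in> verts H. col v = False}" by (rule orient_col[OF mF n22])
  then show ?thesis by blast
qed
qed

end



context fgc begin

definition three :: "'a set \<Rightarrow> bool \<Rightarrow> bool" where
  "three C c \<longleftrightarrow> (\<exists>p1 p2 p3. p1 \<in> C \<and> p2 \<in> C \<and> p3 \<in> C \<and> col p1 = c \<and> col p2 = c \<and> col p3 = c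
       \<and> p1 \<noteq> p2 \<and> p1 \<noteq> p3 \<and> p2 \<noteq> p3)"

lemma A2_small:
  assumes i0V: "i0 \<in> verts H" and iso: "\<And>z. \<not> fe H i0 z"
    and nbr: "\<And>x. x \<in> verts H \<Longrightarrow> x \<noteq> i0 \<Longrightarrow> \<exists>y. fe H x y"
    and nt: "\<not> three (verts H - {i0}) c"
  shows "good_part H {v \<in> verts H. v \<noteq> i0 \<and> col v = c}"
  unfolding good_part_def
proof (intro conjI ballI impI)
  let ?A = "{v \<in> verts H. v \<noteq> i0 \<and> col v = c}"
  show "?A \<subseteq> verts H" by blast
next
  fix x y assume "x \<in> {v \<in> verts H. v \<noteq> i0 \<and> col v = c}" "y \<in> {v \<in> verts H. v \<noteq> i0 \<and> col v = c}"
  then show "\<not> fe H x y" using same_col by auto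
next
  fix x y assume x: "x \<in> verts H - {v \<in> verts H. v \<noteq> i0 \<and> col v = c}"
    and y: "y \<in> verts H - {v \<in> verts H. v \<noteq> i0 \<and> col v = c}"
  show "\<not> fe H x y"
  proof (cases "x = i0 \<or> y = i0")
    case True then show ?thesis using iso fe_commute by metis
  next
    case False then show ?thesis using x y same_col by auto
  qed
next
  fix b a1 a2 a3 assume "a1 \<in> {v \<in> verts H. v \<noteq> i0 \<and> col v = c}" "a2 \<in> {v \<in> verts H. v \<noteq> i0 \<and> col v = c}"
    "a3 \<in> {v \<in> verts H. v \<noteq> i0 \<and> col v = c}" "a1 \<noteq> a2 \<and> a1 \<noteq> a3 \<and> a2 \<noteq> a3"
  then have "three (verts H - {i0}) c" unfolding three_def by blast
  then show "fe H b a1 \<or> fe H b a2 \<or> fe H b a3" using nt by blast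
next
  fix b b' a a' assume b: "b \<in> verts H - {v \<in> verts H. v \<noteq> i0 \<and> col v = c}"
    "b' \<in> verts H - {v \<in> verts H. v \<noteq> i0 \<and> col v = c}"
    and a: "a \<in> {v \<in> verts H. v \<noteq> i0 \<and> col v = c}" "a' \<in> {v \<in> verts H. v \<noteq> i0 \<and> col v = c}"
    and ne: "b \<noteq> b' \<and> a \<noteq> a'"
  show "fe H b a \<or> fe H b a' \<or> fe H b' a \<or> fe H b' a'"
  proof (rule ccontr)
    assume nf: "\<not> (fe H b a \<or> fe H b a' \<or> fe H b' a \<or> fe H b' a')"
    obtain x where x: "x \<in> {b, b'}" "x \<noteq> i0" using ne by blast
    have xV: "x \<in> verts H" "col x \<noteq> c" using x b by auto
    obtain t where t: "fe H x t" using nbr xV x by blast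
    have tV: "t \<in> verts H" "t \<noteq> i0" using t fe_V2 iso fe_commute by metis+
    have ct: "col t = c" using colp[OF t] xV by auto
    have "t \<noteq> a" "t \<noteq> a'" using t nf x by auto
    then have "three (verts H - {i0}) c" unfolding three_def using a ne tV ct by blast
    then show False using nt by blast
  qed
qed

lemma A2_claim:
  assumes i0V: "i0 \<in> verts H" and iso: "\<And>z. \<not> fe H i0 z"
    and conn_C: "\<And>x y. x \<in> verts H \<Longrightarrow> y \<in> verts H \<Longrightarrow> x \<noteq> i0 \<Longrightarrow> y \<noteq> i0 \<Longrightarrow> conn x y"
    and nbr: "\<And>x. x \<in> verts H \<Longrightarrow> x \<noteq> i0 \<Longrightarrow> \<exists>y. fe H x y"
    and qV: "q \<in> verts H" "q \<noteq> i0" and pV: "p1 \<in> verts H" "p1 \<noteq> i0" "p2 \<in> verts H" "p2 \<noteq> i0"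
    and cp: "col p1 = col p2" "col p1 \<noteq> col q" and pne: "p1 \<noteq> p2"
    and m: "\<not> fe H q p1" "\<not> fe H q p2"
    and th: "three (verts H - {i0}) (col q)"
  shows False
proof -
  have i0n: "\<not> fe H z i0" for z using iso fe_commute by metis
  have Dom: False if e1: "fe H a b" and e2: "fe H c d" and dd: "distinct [a,b,c,d]" and zV: "z \<in> verts H"
    and zi: "z \<noteq> i0" and zn: "z \<noteq> a" "z \<noteq> b" "z \<noteq> c" "z \<noteq> d"
    and n: "\<not> fe H z a" "\<not> fe H z b" "\<not> fe H z c" "\<not> fe H z d" for a b c d z
  proof -
    have "i0 \<noteq> a" "i0 \<noteq> b" "i0 \<noteq> c" "i0 \<noteq> d" using e1 e2 iso i0n by metis+
    then have dist: "distinct [a,b,c,d,z,i0]" using dd zn zi by auto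
    show False by (rule S_config[OF e1 e2 dist zV i0V n iso iso iso iso i0n])
  qed
  have cq: "col p2 \<noteq> col q" using cp by auto
  have st1: "x = y" if "fe H p1 x" "fe H p2 y" for x y
  proof (rule ccontr)
    assume xy: "x \<noteq> y"
    have cx: "col x = col q" "col y = col q" using colp that cp by auto
    have "p1 \<noteq> x" "p2 \<noteq> y" using that fe_ne by auto
    moreover have "p1 \<noteq> y" "x \<noteq> p2" using cx cp by auto
    ultimately have dd: "distinct [p1,x,p2,y]" using pne xy by auto
    have "q \<noteq> p1" "q \<noteq> p2" using cp by auto
    moreover have "q \<noteq> x" "q \<noteq> y" using m that fe_commute by metis+
    moreover have "\<not> fe H q x" "\<not> fe H q y" using same_col cx by metis+
    ultimately show False using Dom[OF that(1) that(2) dd qV(1) qV(2)] m by blast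
  qed
  obtain w where w1: "fe H p1 w" using nbr pV by blast
  have Np1: "\<forall>z. fe H p1 z \<longleftrightarrow> z = w"
  proof -
    obtain w' where "fe H p2 w'" using nbr pV by blast
    then show ?thesis using st1 w1 by metis
  qed
  have Np2: "\<forall>z. fe H p2 z \<longleftrightarrow> z = w"
    using st1 w1 nbr pV by metis
  have cw: "col w = col q" using colp w1 cp by auto
  have wV: "w \<in> verts H" "w \<noteq> i0" using w1 fe_V2 i0n by metis+
  have qw: "q \<noteq> w" using w1 m fe_commute by metis
  have wp1: "fe H w p1" "fe H w p2" using Np1 Np2 fe_commute by metis+
  obtain q3 where q3: "q3 \<in> verts H" "q3 \<noteq> i0" "col q3 = col q" "q3 \<noteq> q" "q3 \<noteq> w"
  proof -
    obtain s1 s2 s3 where "s1 \<in> verts H - {i0}" "s2 \<in> verts H - {i0}" "s3 \<in> verts H - {i0}"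
      "col s1 = col q" "col s2 = col q" "col s3 = col q" "s1 \<noteq> s2" "s1 \<noteq> s3" "s2 \<noteq> s3"
      using th unfolding three_def by blast
    then show ?thesis using that by (metis Diff_iff insertI1)
  qed
  have q3p: "\<not> fe H q3 p1" "\<not> fe H q3 p2" using Np1 Np2 q3 fe_commute by metis+
  have st3: "fe H q3 r" if qr: "fe H q r" for r
  proof (rule ccontr)
    assume nr: "\<not> fe H q3 r"
    have cr: "col r = col p1" using colp qr cp by auto
    have "p1 \<noteq> w" using w1 fe_ne by blast
    moreover have "p1 \<noteq> r" using qr m by blast
    moreover have "p1 \<noteq> q" "w \<noteq> r" using cp cr cw by auto
    moreover have "r \<noteq> q" using qr fe_ne by blast
    ultimately have dd: "distinct [p1,w,r,q]" using qw by auto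
    have "q3 \<noteq> p1" "q3 \<noteq> r" using q3 cp cr by auto
    moreover have "\<not> fe H q3 w" "\<not> fe H q3 q" using same_col q3 cw by metis+
    ultimately show False using Dom[OF w1 fe_commute[THEN iffD1, OF qr] dd q3(1) q3(2)] q3 q3p nr by blast
  qed
  have st4: "\<not> fe H w r" if qr: "fe H q r" for r
  proof
    assume wr: "fe H w r"
    have cr: "col r = col p1" using colp qr cp by auto
    have rV: "r \<in> verts H" "q3 \<in> verts H" using qr fe_V2 q3 by auto
    have "q \<noteq> p1" "q \<noteq> p2" "q3 \<noteq> p1" "q3 \<noteq> p2" "r \<noteq> w" using cp cr cw q3 by auto
    moreover have "q \<noteq> r" "q3 \<noteq> r" "p1 \<noteq> w" "p2 \<noteq> w" using qr st3[OF qr] w1 wp1 fe_ne by auto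
    moreover have "p1 \<noteq> r" "p2 \<noteq> r" using qr m by auto
    ultimately have dist: "distinct [q,p1,p2,q3,r,w]" using pne q3 qw by auto
    have rw: "fe H r w" "fe H r q" "fe H r q3" using wr qr st3[OF qr] fe_commute by metis+
    have n1: "\<not> fe H q q3" "\<not> fe H q w" "\<not> fe H p1 p2" "\<not> fe H q3 w" using same_col q3 cw cp by metis+
    have n2: "\<not> fe H p1 r" "\<not> fe H p2 r" using same_col cr cp by metis+
    have n3: "\<not> fe H p1 q3" "\<not> fe H p2 q3" using q3p fe_commute by metis+
    show False
      by (rule T_config[OF qV(1) pV(1) pV(3) rV(2) rV(1) wV(1) dist rw(1) rw(2) rw(3) wp1
          m n1(1) n1(2) n1(3) n3(1) n2(1) n3(2) n2(2) n1(4)])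
  qed
  have st5: "fe H q t" if sV: "s \<in> verts H" "s \<noteq> i0" "col s = col q" "s \<noteq> q" "s \<noteq> w" and st: "fe H s t" for s t
  proof (rule ccontr)
    assume nqt: "\<not> fe H q t"
    have ct: "col t = col p1" using colp st sV cp by auto
    have "p1 \<noteq> w" using w1 fe_ne by blast
    moreover have "p1 \<noteq> t" using st Np1 sV fe_commute by metis
    moreover have "p1 \<noteq> s" "w \<noteq> t" using cp sV ct cw by auto
    moreover have "t \<noteq> s" using st fe_ne by blast
    ultimately have dd: "distinct [p1,w,t,s]" using sV by auto
    have "q \<noteq> p1" "q \<noteq> t" using cp ct by auto
    moreover have "\<not> fe H q w" "\<not> fe H q s" using same_col sV cw by metis+
    ultimately show False using Dom[OF w1 fe_commute[THEN iffD1, OF st] dd qV] qw sV m nqt by metis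
  qed
  have "q \<in> {w} \<union> {z. fe H w z}"
  proof (rule conn_closed[of w q])
    show "conn w q" using conn_C wV qV by blast
    show "w \<in> {w} \<union> {z. fe H w z}" by simp
    fix v z assume v: "v \<in> {w} \<union> {z. fe H w z}" and vz: "fe H v z"
    show "z \<in> {w} \<union> {z. fe H w z}"
    proof (cases "v = w")
      case True then show ?thesis using vz by simp
    next
      case False
      then have wv: "fe H w v" using v by simp
      have cv: "col v \<noteq> col w" "col z \<noteq> col v" using colp wv vz by auto
      have cz: "col z = col q" using cv cw by auto
      have zV: "z \<in> verts H" "z \<noteq> i0" using vz fe_V2 i0n by metis+
      have vz': "fe H z v" using vz fe_commute by metis
      show ?thesis
      proof (cases "z = w")
        case True then show ?thesis by simp
      next
        case zw: False
        show ?thesis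
        proof (cases "z = q")
          case True then show ?thesis using st4 vz' wv by blast
        next
          case False
          then have "fe H q v" using st5[OF zV cz False zw vz'] by blast
          then show ?thesis using st4 wv by blast
        qed
      qed
    qed
  qed
  then show False using qw same_col cw by auto
qed


lemma A2:
  assumes i0V: "i0 \<in> verts H" and iso: "\<And>z. \<not> fe H i0 z"
    and conn_C: "\<And>x y. x \<in> verts H \<Longrightarrow> y \<in> verts H \<Longrightarrow> x \<noteq> i0 \<Longrightarrow> y \<noteq> i0 \<Longrightarrow> conn x y"
    and nbr: "\<And>x. x \<in> verts H \<Longrightarrow> x \<noteq> i0 \<Longrightarrow> \<exists>y. fe H x y"
  shows "\<exists>A. good_part H A"
proof (cases "three (verts H - {i0}) True")
  case False then show ?thesis using A2_small[OF i0V iso nbr False] by blast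
next
  case tT: True
  show ?thesis
  proof (cases "three (verts H - {i0}) False")
    case False then show ?thesis using A2_small[OF i0V iso nbr False] by blast
  next
    case tF: True
    have th: "three (verts H - {i0}) (col q)" for q using tT tF by (cases "col q") auto
    have claim: False if "q \<in> verts H" "q \<noteq> i0" "p1 \<in> verts H" "p1 \<noteq> i0" "p2 \<in> verts H" "p2 \<noteq> i0"
      "col p1 = col p2" "col p1 \<noteq> col q" "p1 \<noteq> p2" "\<not> fe H q p1" "\<not> fe H q p2" for q p1 p2
      using A2_claim[OF i0V iso conn_C nbr that th] .
    have i0n: "\<not> fe H z i0" for z using iso fe_commute by metis
    let ?A = "{v \<in> verts H. v \<noteq> i0 \<and> col v} \<union> {i0}"
    have "good_part H ?A"
      unfolding good_part_def
    proof (intro conjI ballI impI)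
      show "?A \<subseteq> verts H" using i0V by blast
    next
      fix x y assume "x \<in> ?A" "y \<in> ?A" then show "\<not> fe H x y" using same_col iso i0n by auto
    next
      fix x y assume "x \<in> verts H - ?A" "y \<in> verts H - ?A" then show "\<not> fe H x y" using same_col by auto
    next
      fix b a1 a2 a3 assume b: "b \<in> verts H - ?A" and a: "a1 \<in> ?A" "a2 \<in> ?A" "a3 \<in> ?A"
        and ne: "a1 \<noteq> a2 \<and> a1 \<noteq> a3 \<and> a2 \<noteq> a3"
      show "fe H b a1 \<or> fe H b a2 \<or> fe H b a3"
      proof (rule ccontr)
        assume nf: "\<not> (fe H b a1 \<or> fe H b a2 \<or> fe H b a3)"
        have bb: "b \<in> verts H" "b \<noteq> i0" "\<not> col b" using b i0V by auto
        obtain x y where "x \<in> {a1,a2,a3}" "y \<in> {a1,a2,a3}" "x \<noteq> y" "x \<noteq> i0" "y \<noteq> i0"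
          using ne by (cases "a1 = i0"; cases "a2 = i0") auto
        then show False using claim[of b x y] a bb nf by auto
      qed
    next
      fix b b' a a' assume b: "b \<in> verts H - ?A" "b' \<in> verts H - ?A" and a: "a \<in> ?A" "a' \<in> ?A"
        and ne: "b \<noteq> b' \<and> a \<noteq> a'"
      show "fe H b a \<or> fe H b a' \<or> fe H b' a \<or> fe H b' a'"
      proof (rule ccontr)
        assume nf: "\<not> (fe H b a \<or> fe H b a' \<or> fe H b' a \<or> fe H b' a')"
        have bb: "b \<in> verts H" "b \<noteq> i0" "\<not> col b" "b' \<in> verts H" "b' \<noteq> i0" "\<not> col b'" using b i0V by auto
        obtain x where x: "x \<in> {a, a'}" "x \<noteq> i0" using ne by blast
        have xx: "x \<in> verts H" "col x" using x a by auto
        have "\<not> fe H x b" "\<not> fe H x b'" using nf x fe_commute by auto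
        then show False using claim[of x b b'] xx x bb ne by auto
      qed
    qed
    then show ?thesis by blast
  qed
qed

lemma A3_claim:
  assumes dV: "d1 \<in> verts H" "d2 \<in> verts H" and d12: "fe H d1 d2"
    and N1: "\<And>z. fe H d1 z \<Longrightarrow> z = d2" and N2: "\<And>z. fe H d2 z \<Longrightarrow> z = d1"
    and nbr: "\<And>x. x \<in> verts H \<Longrightarrow> x \<noteq> d1 \<Longrightarrow> x \<noteq> d2 \<Longrightarrow> \<exists>y. fe H x y"
    and qV: "q \<in> verts H" "q \<noteq> d1" "q \<noteq> d2"
    and pV: "p1 \<in> verts H" "p1 \<noteq> d1" "p1 \<noteq> d2" "p2 \<in> verts H" "p2 \<noteq> d1" "p2 \<noteq> d2"
    and cp: "col p1 = col p2" "col p1 \<noteq> col q" and pne: "p1 \<noteq> p2"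
    and m: "\<not> fe H q p1" "\<not> fe H q p2"
  shows False
proof -
  obtain p where qp: "fe H q p" using nbr qV by blast
  have cpp: "col p = col p1" using colp qp cp by auto
  have "p \<noteq> d1" using qp N1 N2 qV fe_commute by metis
  moreover have "p \<noteq> d2" using qp N1 N2 qV fe_commute by metis
  moreover have "q \<noteq> p" using qp fe_ne by blast
  moreover have "q \<noteq> p1" "q \<noteq> p2" using cp by auto
  moreover have "p \<noteq> p1" "p \<noteq> p2" using qp m by auto
  moreover have "d1 \<noteq> d2" using d12 fe_ne by blast
  ultimately have dist: "distinct [q,p,d1,d2,p1,p2]" using qV pV pne by auto
  have n1: "\<not> fe H p1 q" "\<not> fe H p2 q" using m fe_commute by metis+
  have n2: "\<not> fe H p1 p" "\<not> fe H p2 p" "\<not> fe H p1 p2" using same_col cpp cp by metis+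
  have n3: "\<not> fe H p1 d1" "\<not> fe H p1 d2" "\<not> fe H p2 d1" "\<not> fe H p2 d2" using N1 N2 pV fe_commute by metis+
  show False by (rule S_config[OF qp d12 dist pV(1) pV(4) n1(1) n2(1) n3(1) n3(2) n1(2) n2(2) n3(3) n3(4) n2(3)])
qed

lemma A3_small:
  assumes dV: "d1 \<in> verts H" "d2 \<in> verts H" and d12: "fe H d1 d2"
    and N1: "\<And>z. fe H d1 z \<Longrightarrow> z = d2" and N2: "\<And>z. fe H d2 z \<Longrightarrow> z = d1"
    and nbr: "\<And>x. x \<in> verts H \<Longrightarrow> x \<noteq> d1 \<Longrightarrow> x \<noteq> d2 \<Longrightarrow> \<exists>y. fe H x y"
    and nt: "\<not> three (verts H - {d1, d2}) c"
  shows "\<exists>A. good_part H A"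
proof -
  have claim: False if "q \<in> verts H" "q \<noteq> d1" "q \<noteq> d2" "p1 \<in> verts H" "p1 \<noteq> d1" "p1 \<noteq> d2"
      "p2 \<in> verts H" "p2 \<noteq> d1" "p2 \<noteq> d2"
      "col p1 = col p2" "col p1 \<noteq> col q" "p1 \<noteq> p2" "\<not> fe H q p1" "\<not> fe H q p2" for q p1 p2
    using A3_claim[OF dV d12 N1 N2 nbr that] .
  have dne: "d1 \<noteq> d2" using d12 fe_ne by blast
  have d21: "fe H d2 d1" using d12 fe_commute by metis
  have n1: "\<not> fe H d1 z" if "z \<noteq> d2" for z using N1 that by blast
  have n2: "\<not> fe H d2 z" if "z \<noteq> d1" for z using N2 that by blast
  have n1': "\<not> fe H z d1" if "z \<noteq> d2" for z using n1 that fe_commute by metis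
  have n2': "\<not> fe H z d2" if "z \<noteq> d1" for z using n2 that fe_commute by metis
  let ?C = "verts H - {d1, d2}"
  let ?A = "{v \<in> ?C. col v = c} \<union> {d1}"
  have "good_part H ?A"
    unfolding good_part_def
  proof (intro conjI ballI impI)
    show "?A \<subseteq> verts H" using dV by blast
  next
    fix x y assume "x \<in> ?A" "y \<in> ?A" then show "\<not> fe H x y" using same_col n1 n1' dne by auto
  next
    fix x y assume "x \<in> verts H - ?A" "y \<in> verts H - ?A" then show "\<not> fe H x y" using same_col n2 n2' dne by auto
  next
    fix b a1 a2 a3 assume b: "b \<in> verts H - ?A" and a: "a1 \<in> ?A" "a2 \<in> ?A" "a3 \<in> ?A"
      and ne: "a1 \<noteq> a2 \<and> a1 \<noteq> a3 \<and> a2 \<noteq> a3"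
    show "fe H b a1 \<or> fe H b a2 \<or> fe H b a3"
    proof (rule ccontr)
      assume nf: "\<not> (fe H b a1 \<or> fe H b a2 \<or> fe H b a3)"
      show False
      proof (cases "b = d2")
        case True
        then have "a1 \<noteq> d1" "a2 \<noteq> d1" "a3 \<noteq> d1" using nf d21 by auto
        then have "three ?C c" using a ne unfolding three_def by auto
        then show False using nt by blast
      next
        case False
        have bb: "b \<in> verts H" "b \<noteq> d1" "b \<noteq> d2" "col b \<noteq> c" using b False by auto
        obtain x y where "x \<in> {a1,a2,a3}" "y \<in> {a1,a2,a3}" "x \<noteq> y" "x \<noteq> d1" "y \<noteq> d1"
          using ne by (cases "a1 = d1"; cases "a2 = d1") auto
        then show False using claim[of b x y] a bb nf by auto
      qed
    qed
  next
    fix b b' a a' assume b: "b \<in> verts H - ?A" "b' \<in> verts H - ?A" and a: "a \<in> ?A" "a' \<in> ?A"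
      and ne: "b \<noteq> b' \<and> a \<noteq> a'"
    show "fe H b a \<or> fe H b a' \<or> fe H b' a \<or> fe H b' a'"
    proof (rule ccontr)
      assume nf: "\<not> (fe H b a \<or> fe H b a' \<or> fe H b' a \<or> fe H b' a')"
      show False
      proof (cases "b = d2 \<or> b' = d2")
        case True
        then obtain y where y: "y \<in> {b, b'}" "y \<noteq> d2" using ne by blast
        have "a \<noteq> d1" "a' \<noteq> d1" using True nf d21 by auto
        then have aa: "a \<in> ?C" "col a = c" "a' \<in> ?C" "col a' = c" using a by auto
        have yy: "y \<in> verts H" "y \<noteq> d1" "y \<noteq> d2" "col y \<noteq> c" using y b by auto
        have "\<not> fe H y a" "\<not> fe H y a'" using y nf by auto
        then show False using claim[of y a a'] aa yy ne by auto
      next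
        case False
        have bb: "b \<in> verts H" "b \<noteq> d1" "b \<noteq> d2" "col b \<noteq> c" "b' \<in> verts H" "b' \<noteq> d1" "b' \<noteq> d2" "col b' \<noteq> c"
          using b False by auto
        obtain x where x: "x \<in> {a, a'}" "x \<noteq> d1" using ne by blast
        have xx: "x \<in> verts H" "col x = c" "x \<noteq> d2" using x a by auto
        have "\<not> fe H x b" "\<not> fe H x b'" using nf x fe_commute by auto
        then show False using claim[of x b b'] xx x bb ne by auto
      qed
    qed
  qed
  then show ?thesis by blast
qed


lemma A3:
  assumes dV: "d1 \<in> verts H" "d2 \<in> verts H" and d12: "fe H d1 d2"
    and N1: "\<And>z. fe H d1 z \<Longrightarrow> z = d2" and N2: "\<And>z. fe H d2 z \<Longrightarrow> z = d1"
    and nbr: "\<And>x. x \<in> verts H \<Longrightarrow> x \<noteq> d1 \<Longrightarrow> x \<noteq> d2 \<Longrightarrow> \<exists>y. fe H x y"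
  shows "\<exists>A. good_part H A"
proof (cases "three (verts H - {d1, d2}) True")
  case False then show ?thesis using A3_small[OF dV d12 N1 N2 nbr False] by blast
next
  case tT: True
  show ?thesis
  proof (cases "three (verts H - {d1, d2}) False")
    case False then show ?thesis using A3_small[OF dV d12 N1 N2 nbr False] by blast
  next
    case tF: True
    have claim: False if "q \<in> verts H" "q \<noteq> d1" "q \<noteq> d2" "p1 \<in> verts H" "p1 \<noteq> d1" "p1 \<noteq> d2"
        "p2 \<in> verts H" "p2 \<noteq> d1" "p2 \<noteq> d2"
        "col p1 = col p2" "col p1 \<noteq> col q" "p1 \<noteq> p2" "\<not> fe H q p1" "\<not> fe H q p2" for q p1 p2
      using A3_claim[OF dV d12 N1 N2 nbr that] .
    obtain p1 p2 p3 where P: "p1 \<in> verts H" "p1 \<noteq> d1" "p1 \<noteq> d2" "p2 \<in> verts H" "p2 \<noteq> d1" "p2 \<noteq> d2"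
      "p3 \<in> verts H" "p3 \<noteq> d1" "p3 \<noteq> d2" "col p1" "col p2" "col p3" "p1 \<noteq> p2" "p1 \<noteq> p3" "p2 \<noteq> p3"
      using tT unfolding three_def by auto
    obtain q1 q2 q3 where Q: "q1 \<in> verts H" "q1 \<noteq> d1" "q1 \<noteq> d2" "q2 \<in> verts H" "q2 \<noteq> d1" "q2 \<noteq> d2"
      "q3 \<in> verts H" "q3 \<noteq> d1" "q3 \<noteq> d2" "\<not> col q1" "\<not> col q2" "\<not> col q3" "q1 \<noteq> q2" "q1 \<noteq> q3" "q2 \<noteq> q3"
      using tF unfolding three_def by auto
    note PQ = P Q
    have pm0: "fe H p1 q1 \<or> fe H p1 q2" by (rule ccontr) (use claim[of p1 q1 q2] PQ fe_commute in auto)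
    have pm1: "fe H p1 q1 \<or> fe H p2 q1" by (rule ccontr) (use claim[of q1 p1 p2] PQ fe_commute in auto)
    have pm2: "fe H p1 q1 \<or> fe H p1 q3" by (rule ccontr) (use claim[of p1 q1 q3] PQ fe_commute in auto)
    have pm3: "fe H p1 q1 \<or> fe H p3 q1" by (rule ccontr) (use claim[of q1 p1 p3] PQ fe_commute in auto)
    have pm4: "fe H p1 q2 \<or> fe H p1 q3" by (rule ccontr) (use claim[of p1 q2 q3] PQ fe_commute in auto)
    have pm5: "fe H p2 q1 \<or> fe H p3 q1" by (rule ccontr) (use claim[of q1 p2 p3] PQ fe_commute in auto)
    have pm6: "fe H p2 q1 \<or> fe H p2 q2" by (rule ccontr) (use claim[of p2 q1 q2] PQ fe_commute in auto)
    have pm7: "fe H p1 q2 \<or> fe H p2 q2" by (rule ccontr) (use claim[of q2 p1 p2] PQ fe_commute in auto)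
    have pm8: "fe H p2 q1 \<or> fe H p2 q3" by (rule ccontr) (use claim[of p2 q1 q3] PQ fe_commute in auto)
    have pm9: "fe H p1 q2 \<or> fe H p3 q2" by (rule ccontr) (use claim[of q2 p1 p3] PQ fe_commute in auto)
    have pm10: "fe H p2 q2 \<or> fe H p2 q3" by (rule ccontr) (use claim[of p2 q2 q3] PQ fe_commute in auto)
    have pm11: "fe H p2 q2 \<or> fe H p3 q2" by (rule ccontr) (use claim[of q2 p2 p3] PQ fe_commute in auto)
    have pm12: "fe H p3 q1 \<or> fe H p3 q2" by (rule ccontr) (use claim[of p3 q1 q2] PQ fe_commute in auto)
    have pm13: "fe H p1 q3 \<or> fe H p2 q3" by (rule ccontr) (use claim[of q3 p1 p2] PQ fe_commute in auto)
    have pm14: "fe H p3 q1 \<or> fe H p3 q3" by (rule ccontr) (use claim[of p3 q1 q3] PQ fe_commute in auto)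
    have pm15: "fe H p1 q3 \<or> fe H p3 q3" by (rule ccontr) (use claim[of q3 p1 p3] PQ fe_commute in auto)
    have pm16: "fe H p3 q2 \<or> fe H p3 q3" by (rule ccontr) (use claim[of p3 q2 q3] PQ fe_commute in auto)
    have pm17: "fe H p2 q3 \<or> fe H p3 q3" by (rule ccontr) (use claim[of q3 p2 p3] PQ fe_commute in auto)
    have dne: "d1 \<noteq> d2" using d12 fe_ne by blast
    have dall: "distinct [d1,p1,p2,p3,d2,q1,q2,q3]" using P Q dne by auto
    have n1: "\<not> fe H d1 z" if "z \<noteq> d2" for z using N1 that by blast
    have n2: "\<not> fe H d2 z" if "z \<noteq> d1" for z using N2 that by blast
    show ?thesis
      apply (rule ccontr)
      apply (rule K_pm[of d1 p1 p2 p3 d2 q1 q2 q3])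
      using dV P Q dall d12 pm0 pm1 pm2 pm3 pm4 pm5 pm6 pm7 pm8 pm9 pm10 pm11 pm12 pm13 pm14 pm15 pm16 pm17 apply (simp_all only: simp_thms)
      using n1 n2 P Q same_col by metis+
  qed
qed

lemma caseA:
  assumes e1: "fe H x1 y1" and e2: "fe H x2 y2" and d: "distinct [x1,y1,x2,y2]" and cx: "conn x1 x2"
  shows "\<exists>A. good_part H A"
proof -
  have inC: "conn x1 x1" "conn x1 y1" "conn x1 x2" "conn x1 y2" using e1 e2 cx by auto
  have sep: "\<not> fe H z t \<and> z \<noteq> t" if "conn x1 t" "\<not> conn x1 z" for z t
    using that fe_commute by (metis conn_trans conn_edge)
  have outside: "fe H z z'" if zV: "z \<in> verts H" "z' \<in> verts H" and nz: "\<not> conn x1 z" "\<not> conn x1 z'"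
    and zz: "z \<noteq> z'" for z z'
  proof (rule ccontr)
    assume nzz: "\<not> fe H z z'"
    have s1: "\<not> fe H z x1 \<and> z \<noteq> x1" "\<not> fe H z y1 \<and> z \<noteq> y1" "\<not> fe H z x2 \<and> z \<noteq> x2" "\<not> fe H z y2 \<and> z \<noteq> y2"
      using sep[OF _ nz(1)] inC by blast+
    have s2: "\<not> fe H z' x1 \<and> z' \<noteq> x1" "\<not> fe H z' y1 \<and> z' \<noteq> y1" "\<not> fe H z' x2 \<and> z' \<noteq> x2" "\<not> fe H z' y2 \<and> z' \<noteq> y2"
      using sep[OF _ nz(2)] inC by blast+
    have dist: "distinct [x1,y1,x2,y2,z,z']" using d s1 s2 zz by auto
    show False using S_config[OF e1 e2 dist zV] s1 s2 nzz by blast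
  qed
  have nbrC: "\<exists>w. fe H z w" if "conn x1 z" for z
    using that
  proof (cases rule: rtranclp.cases)
    case rtrancl_refl then show ?thesis using e1 by blast
  next
    case (rtrancl_into_rtrancl b) then show ?thesis using fe_commute by metis
  qed
  have connC: "conn a b" if "conn x1 a" "conn x1 b" for a b using that conn_sym conn_trans by metis
  show ?thesis
  proof (cases "\<forall>z\<in>verts H. conn x1 z")
    case True
    show ?thesis by (rule A1) (use True connC nbrC in blast)+
  next
    case False
    then obtain i0 where i0: "i0 \<in> verts H" "\<not> conn x1 i0" by blast
    show ?thesis
    proof (cases "\<forall>z\<in>verts H. \<not> conn x1 z \<longrightarrow> z = i0")
      case True
      have iso: "\<not> fe H i0 z" for z
      proof
        assume iz: "fe H i0 z"
        then have "z \<in> verts H" using fe_V2 by blast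
        moreover have "\<not> conn x1 z" using iz i0 fe_commute conn_trans conn_edge by metis
        ultimately have "z = i0" using True by blast
        then show False using iz fe_irr by simp
      qed
      show ?thesis
        by (rule A2[OF i0(1) iso]) (use True connC nbrC in blast)+
    next
      case False
      then obtain dd where dd: "dd \<in> verts H" "\<not> conn x1 dd" "dd \<noteq> i0" by blast
      have d12: "fe H i0 dd" using outside i0 dd by blast
      have only: "z = i0 \<or> z = dd" if "z \<in> verts H" "\<not> conn x1 z" for z
      proof (rule ccontr)
        assume "\<not> (z = i0 \<or> z = dd)"
        then have "fe H z i0" "fe H z dd" using outside that i0 dd by auto
        then show False using no_tri[OF d12] fe_commute by metis
      qed
      have N1: "z = dd" if "fe H i0 z" for z
      proof -
        have "z \<in> verts H" using that fe_V2 by blast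
        moreover have "\<not> conn x1 z" using that i0 fe_commute conn_trans conn_edge by metis
        ultimately show ?thesis using only that fe_irr by blast
      qed
      have N2: "z = i0" if "fe H dd z" for z
      proof -
        have "z \<in> verts H" using that fe_V2 by blast
        moreover have "\<not> conn x1 z" using that dd fe_commute conn_trans conn_edge by metis
        ultimately show ?thesis using only that fe_irr by blast
      qed
      show ?thesis
      proof (rule A3[OF i0(1) dd(1) d12 N1 N2])
        fix x assume "x \<in> verts H" "x \<noteq> i0" "x \<noteq> dd"
        then have "conn x1 x" using only by blast
        then show "\<exists>y. fe H x y" by (rule nbrC)
      qed
    qed
  qed
qed

lemma orient: "\<exists>A. good_part H A"
proof (cases "\<exists>x1 y1 x2 y2. fe H x1 y1 \<and> fe H x2 y2 \<and> distinct [x1,y1,x2,y2] \<and> conn x1 x2")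
  case True then show ?thesis using caseA by blast
next
  case False then show ?thesis using caseB by blast
qed

end

theorem hard_dir:
  assumes sg: "simple_graph H" and fr: "Free N_graphs H"
  shows "in_Qstar H"
proof -
  interpret fgr H using sg fr by unfold_locales
  obtain col :: "'a \<Rightarrow> bool" where col: "\<forall>x y. fe H x y \<longrightarrow> col x \<noteq> col y" using bip by blast
  interpret fgc H col using col by unfold_locales blast
  obtain A where "good_part H A" using orient by blast
  then show ?thesis using construct[OF sg] by blast
qed


theorem lemma4p3:
  fixes H :: "'a graph"
  assumes "simple_graph H"
  shows "in_Qstar H \<longleftrightarrow> Free N_graphs H"
  using easy_dir hard_dir[OF assms] by blast

end
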